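(* Let $q\ge8$ be even. The $\mathrm{U}\Gamma$-lines (non-tangent unisecants of the twisted cubic $\mathcal{C}$ lying in an osculating plane) form two orbits under $G_q$, of sizes $q+1$ and $q^2-1$, namely $\{\ell_1\varphi:\varphi\in G_q\}$ and $\{\ell_2\varphi:\varphi\in G_q\}$, where $P_0=P(0,0,0,1)$, $\ell_1$ is the line through $P_0$ and $P(0,1,0,0)$, and $\ell_2$ is the line through $P_0$ and $P(0,1,1,0)$. The orbit of size $q+1$ consists of the lines of the regulus complementary to that of the tangents. The subgroup $G_q^{\ell_1}$ of $G_q$ fixing $\ell_1$ has size $q(q-1)$, and each of its elements has a matrix of the form $\begin{pmatrix}1&c&c^2&c^3\\0&d&0&c^2d\\0&0&d^2&cd^2\\0&0&0&d^3\end{pmatrix}$, $c\in\mathbb{F}_q$, $d\in\mathbb{F}_q^*$. The subgroup $G_q^{\ell_2}$ fixing $\ell_2$ has size $q$, and each of its elements has a matrix of the form $\begin{pmatrix}1&c&c^2&c^3\\0&1&0&c^2\\0&0&1&c\\0&0&0&1\end{pmatrix}$, $c\in\mathbb{F}_q$.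
   Context: $\mathrm{PG}(3,q)$ has points $P(x_0,x_1,x_2,x_3)$; $\boldsymbol{\pi}(c_0,c_1,c_2,c_3)$ is the plane $c_0x_0+c_1x_1+c_2x_2+c_3x_3=0$. For $t\in\mathbb{F}_q$ let $P_t=P(t^3,t^2,t,1)$, $P_\infty=P(1,0,0,0)$; the twisted cubic is $\mathcal{C}=\{P_t\}$. The osculating planes are $\pi_{\mathrm{osc}}(t)=\boldsymbol{\pi}(1,-3t,3t^2,-t^3)$ ($t\in\mathbb{F}_q$), $\pi_{\mathrm{osc}}(\infty)=\boldsymbol{\pi}(0,0,0,1)$. The tangent at $P_t$ ($t\in\mathbb{F}_q$) is the line through $P_t$ and $P(3t^2,2t,1,0)$; the tangent at $P_\infty$ is $x_2=x_3=0$. A $\mathrm{U}\Gamma$-line is a line meeting $\mathcal{C}$ in exactly one point, not a tangent, contained in an osculating plane. For $q$ even the $q+1$ tangents form a regulus; the complementary regulus is the opposite family of $q+1$ lines of the same hyperbolic quadric. $G_q$ is the group of projectivities mapping $\mathcal{C}$ to itself; for $q\ge5$ its elements are $x\mapsto xM$ on row vectors, $M=\begin{pmatrix} a^3&a^2c&ac^2&c^3\\ 3a^2b&a^2d+2abc&bc^2+2acd&3c^2d\\ 3ab^2&b^2c+2abd&ad^2+2bcd&3cd^2\\ b^3&b^2d&bd^2&d^3\end{pmatrix}$, $ad-bc\ne0$, up to scalar. *)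

theory Defs
  imports "HOL-Analysis.Analysis"
begin

text \<open>Homogeneous coordinates of PG(3,q): vectors of type 'a^4 over a finite field 'a.
  The coordinates x0,x1,x2,x3 of the paper are the entries 1,2,3,4 of the vector
  (written with vector [x0,x1,x2,x3]).  A point is represented by any nonzero vector;
  a line is represented by its underlying 2-dimensional subspace (a set of vectors).\<close>

definition pt :: "'a::field \<Rightarrow> 'a \<Rightarrow> 'a \<Rightarrow> 'a \<Rightarrow> 'a^4" where
  "pt x0 x1 x2 x3 = vector [x0, x1, x2, x3]"

definition proportional :: "'a::field^4 \<Rightarrow> 'a^4 \<Rightarrow> bool" where
  "proportional u v \<longleftrightarrow> (\<exists>k. k \<noteq> 0 \<and> v = k *s u)"

definition line_through :: "'a::field^4 \<Rightarrow> 'a^4 \<Rightarrow> ('a^4) set" where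
  "line_through u v = {a *s u + b *s v | a b. True}"

definition is_line :: "('a::field^4) set \<Rightarrow> bool" where
  "is_line L \<longleftrightarrow> (\<exists>u v. u \<noteq> 0 \<and> v \<noteq> 0 \<and> \<not> proportional u v \<and> L = line_through u v)"

definition on_line :: "'a::field^4 \<Rightarrow> ('a^4) set \<Rightarrow> bool" where
  "on_line x L \<longleftrightarrow> x \<noteq> 0 \<and> x \<in> L"

definition pdot :: "'a::field^4 \<Rightarrow> 'a^4 \<Rightarrow> 'a" where
  "pdot c x = (\<Sum>i\<in>UNIV. c $ i * x $ i)"

definition line_in_plane :: "('a::field^4) set \<Rightarrow> 'a^4 \<Rightarrow> bool" where
  "line_in_plane L c \<longleftrightarrow> (\<forall>x\<in>L. pdot c x = 0)"

text \<open>Points of the twisted cubic, parametrised by t in F_q \<union> {\<infinity>} (None = \<infinity>).\<close>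
fun cpt :: "'a::field option \<Rightarrow> 'a^4" where
  "cpt (Some t) = pt (t^3) (t^2) t 1"
| "cpt None = pt 1 0 0 0"

definition cubic_vecs :: "('a::field^4) set" where
  "cubic_vecs = {k *s cpt t | k t. k \<noteq> 0}"

fun osc :: "'a::field option \<Rightarrow> 'a^4" where
  "osc (Some t) = pt 1 (- 3 * t) (3 * t^2) (- (t^3))"
| "osc None = pt 0 0 0 1"

fun tangent :: "'a::field option \<Rightarrow> ('a^4) set" where
  "tangent (Some t) = line_through (cpt (Some t)) (pt (3 * t^2) (2 * t) 1 0)"
| "tangent None = {x. x $ 3 = 0 \<and> x $ 4 = 0}"

definition UGamma_line :: "('a::{field,finite}^4) set \<Rightarrow> bool" where
  "UGamma_line L \<longleftrightarrow> is_line L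
     \<and> card {t. on_line (cpt t) L} = 1
     \<and> (\<forall>t. L \<noteq> tangent t)
     \<and> (\<exists>t. line_in_plane L (osc t))"

definition lines_meet :: "('a::field^4) set \<Rightarrow> ('a^4) set \<Rightarrow> bool" where
  "lines_meet L M \<longleftrightarrow> (\<exists>x. on_line x L \<and> on_line x M)"

definition compl_tangent_regulus :: "('a::field^4) set set" where
  "compl_tangent_regulus = {L. is_line L \<and> (\<forall>t. lines_meet L (tangent t))}"

text \<open>Projectivities: classes of invertible 4x4 matrices modulo nonzero scalars,
  acting on row vectors by x \<mapsto> x M.\<close>
definition proj_class :: "'a::field^4^4 \<Rightarrow> ('a^4^4) set" where
  "proj_class M = {(\<chi> i j. k * M $ i $ j) | k. k \<noteq> 0}"

definition Gq :: "('a::{field,finite}^4^4) set set" where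
  "Gq = {proj_class M | M. invertible M \<and> (\<lambda>x. x v* M) ` cubic_vecs = cubic_vecs}"

definition pmap :: "('a::field^4^4) set \<Rightarrow> ('a^4) set \<Rightarrow> ('a^4) set" where
  "pmap \<phi> L = {x v* M | x M. x \<in> L \<and> M \<in> \<phi>}"

definition orbit_Gq :: "('a::{field,finite}^4) set \<Rightarrow> ('a^4) set set" where
  "orbit_Gq L = {pmap \<phi> L | \<phi>. \<phi> \<in> Gq}"

definition stab_Gq :: "('a::{field,finite}^4) set \<Rightarrow> ('a^4^4) set set" where
  "stab_Gq L = {\<phi> \<in> Gq. pmap \<phi> L = L}"

definition mat4 :: "'a \<Rightarrow> 'a \<Rightarrow> 'a \<Rightarrow> 'a \<Rightarrow> 'a \<Rightarrow> 'a \<Rightarrow> 'a \<Rightarrow> 'a \<Rightarrow>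
    'a \<Rightarrow> 'a \<Rightarrow> 'a \<Rightarrow> 'a \<Rightarrow> 'a \<Rightarrow> 'a \<Rightarrow> 'a \<Rightarrow> 'a \<Rightarrow> ('a::zero)^4^4" where
  "mat4 a11 a12 a13 a14 a21 a22 a23 a24 a31 a32 a33 a34 a41 a42 a43 a44 =
     vector [vector [a11, a12, a13, a14], vector [a21, a22, a23, a24],
             vector [a31, a32, a33, a34], vector [a41, a42, a43, a44]]"

definition ell1 :: "('a::field^4) set" where
  "ell1 = line_through (pt 0 0 0 1) (pt 0 1 0 0)"

definition ell2 :: "('a::field^4) set" where
  "ell2 = line_through (pt 0 0 0 1) (pt 0 1 1 0)"

end

theory Submission
  imports Defs "HOL-Computational_Algebra.Polynomial"
begin


lemma pt_nth [simp]: "pt a b c d $ 1 = a" "pt a b c d $ 2 = b" "pt a b c d $ 3 = c" "pt a b c d $ 4 = d"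
  unfolding pt_def vector_def by simp_all

lemma vec4_eq_iff: "(x::'a^4) = y \<longleftrightarrow> x$1 = y$1 \<and> x$2 = y$2 \<and> x$3 = y$3 \<and> x$4 = y$4"
  by (auto simp: vec_eq_iff forall_4)

lemma pt_eta: "(x::'a::field^4) = pt (x$1) (x$2) (x$3) (x$4)"
  by (simp add: vec4_eq_iff)

lemma pt_eq_iff [simp]: "pt a b c d = pt a' b' c' d' \<longleftrightarrow> a = a' \<and> b = b' \<and> c = c' \<and> d = d'"
  by (simp add: vec4_eq_iff)

lemma pt_eq_0 [simp]: "pt a b c d = 0 \<longleftrightarrow> a = 0 \<and> b = 0 \<and> c = 0 \<and> d = 0"
  by (simp add: vec4_eq_iff)

lemma smult_pt [simp]: "k *s pt a b c d = pt (k*a) (k*b) (k*c) (k*d)"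
  by (simp add: vec4_eq_iff)

lemma add_pt [simp]: "pt a b c d + pt a' b' c' d' = pt (a+a') (b+b') (c+c') (d+d')"
  by (simp add: vec4_eq_iff)

lemma diff_pt [simp]: "pt a b c d - pt a' b' c' d' = (pt (a-a') (b-b') (c-c') (d-d') :: 'a::field^4)"
  by (simp add: vec4_eq_iff)

lemma mat4_nth [simp]:
 "mat4 a11 a12 a13 a14 a21 a22 a23 a24 a31 a32 a33 a34 a41 a42 a43 a44 $ 1 = pt a11 a12 a13 a14"
 "mat4 a11 a12 a13 a14 a21 a22 a23 a24 a31 a32 a33 a34 a41 a42 a43 a44 $ 2 = pt a21 a22 a23 a24"
 "mat4 a11 a12 a13 a14 a21 a22 a23 a24 a31 a32 a33 a34 a41 a42 a43 a44 $ 3 = pt a31 a32 a33 a34"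
 "mat4 a11 a12 a13 a14 a21 a22 a23 a24 a31 a32 a33 a34 a41 a42 a43 a44 $ 4 = pt a41 a42 a43 a44"
  unfolding mat4_def pt_def vector_def by simp_all

lemma mat4_eta: "(M::'a::field^4^4) = mat4 (M$1$1) (M$1$2) (M$1$3) (M$1$4) (M$2$1) (M$2$2) (M$2$3) (M$2$4)
   (M$3$1) (M$3$2) (M$3$3) (M$3$4) (M$4$1) (M$4$2) (M$4$3) (M$4$4)"
  by (simp add: vec4_eq_iff[of M] pt_eta[symmetric])

lemma vm_mat4 [simp]: "pt (x1::'a::field) x2 x3 x4 v* mat4 a11 a12 a13 a14 a21 a22 a23 a24 a31 a32 a33 a34 a41 a42 a43 a44
  = pt (x1*a11 + x2*a21 + x3*a31 + x4*a41) (x1*a12 + x2*a22 + x3*a32 + x4*a42)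
       (x1*a13 + x2*a23 + x3*a33 + x4*a43) (x1*a14 + x2*a24 + x3*a34 + x4*a44)"
  by (simp add: vec4_eq_iff vector_matrix_mult_def sum_4 mult.commute)

lemma mm_mat4 [simp]: "mat4 (a11::'a::field) a12 a13 a14 a21 a22 a23 a24 a31 a32 a33 a34 a41 a42 a43 a44 **
   mat4 b11 b12 b13 b14 b21 b22 b23 b24 b31 b32 b33 b34 b41 b42 b43 b44 =
   mat4 (a11*b11+a12*b21+a13*b31+a14*b41) (a11*b12+a12*b22+a13*b32+a14*b42) (a11*b13+a12*b23+a13*b33+a14*b43) (a11*b14+a12*b24+a13*b34+a14*b44)
        (a21*b11+a22*b21+a23*b31+a24*b41) (a21*b12+a22*b22+a23*b32+a24*b42) (a21*b13+a22*b23+a23*b33+a24*b43) (a21*b14+a22*b24+a23*b34+a24*b44)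
        (a31*b11+a32*b21+a33*b31+a34*b41) (a31*b12+a32*b22+a33*b32+a34*b42) (a31*b13+a32*b23+a33*b33+a34*b43) (a31*b14+a32*b24+a33*b34+a34*b44)
        (a41*b11+a42*b21+a43*b31+a44*b41) (a41*b12+a42*b22+a43*b32+a44*b42) (a41*b13+a42*b23+a43*b33+a44*b43) (a41*b14+a42*b24+a43*b34+a44*b44)"
  apply (subst vec4_eq_iff) 
  apply (simp add: matrix_matrix_mult_def vec4_eq_iff sum_4)
  done

lemma pdot_pt [simp]: "pdot (pt a b c d) (pt x y z w) = a*x + b*y + c*z + d*w"
  by (simp add: pdot_def sum_4)

lemma scale_mat4 [simp]: "(\<chi> i j. (k::'a::field) * mat4 a11 a12 a13 a14 a21 a22 a23 a24 a31 a32 a33 a34 a41 a42 a43 a44 $ i $ j)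
  = mat4 (k*a11) (k*a12) (k*a13) (k*a14) (k*a21) (k*a22) (k*a23) (k*a24) (k*a31) (k*a32) (k*a33) (k*a34) (k*a41) (k*a42) (k*a43) (k*a44)"
  by (simp add: vec4_eq_iff)

lemma assumes "(2::'a::field) = 0" shows "(a + b)^2 = a^2 + (b::'a)^2"
proof - have "(a + b)^2 = a^2 + b^2 + 2*a*b" by algebra then show ?thesis using assms by simp qed


section \<open>Characteristic two\<close>

lemma fin_pow_card: "(x::'a::{field,finite}) ^ CARD('a) = x"
proof (cases "x = 0")
  case False
  have "x * (\<Prod>y\<in>UNIV-{0}. x * y) = x * x ^ (CARD('a) - 1) * \<Prod>(UNIV-{0::'a})"
    by (simp add: prod.distrib mult_ac)
  also have "x * x ^ (CARD('a) - 1) = x ^ Suc (CARD('a) - 1)"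
    by (subst power_Suc) auto
  also have "Suc (CARD('a) - 1) = CARD('a)"
    using finite_UNIV_card_ge_0[where ?'a = 'a] by simp
  also have "(\<Prod>y\<in>UNIV-{0}. x * y) = (\<Prod>y\<in>UNIV-{0::'a}. y)"
    by (rule prod.reindex_bij_witness[of _ "\<lambda>y. y / x" "\<lambda>y. x * y"]) (use False in auto)
  finally show ?thesis
    by simp
qed (use finite_UNIV_card_ge_0[where ?'a = 'a] in auto)

lemma char2: assumes "even CARD('a::{field,finite})" shows "(2::'a) = 0"
proof -
  have "(-1::'a) ^ CARD('a) = 1" using assms by simp
  then have "(-1::'a) = 1" using fin_pow_card[of "-1::'a"] by simp
  then have "(1::'a) + 1 = 0" by (metis add.right_inverse)
  then show ?thesis by simp
qed

section \<open>Scalar multiples of matrices\<close>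

definition smat :: "'a::field \<Rightarrow> 'a^4^4 \<Rightarrow> 'a^4^4" where
  "smat k M = (\<chi> i j. k * M $ i $ j)"

lemma smat_nth [simp]: "smat k M $ i $ j = k * M $ i $ j"
  by (simp add: smat_def)

lemma smat_mult_left: "smat k A ** B = smat k (A ** B)"
  by (simp add: vec_eq_iff matrix_matrix_mult_def sum_distrib_left mult.assoc)

lemma smat_mult_right: "A ** smat k B = smat k (A ** B)"
  by (simp add: vec_eq_iff matrix_matrix_mult_def sum_distrib_left mult_ac)

lemma smat_smat [simp]: "smat k (smat l A) = smat (k*l) A"
  by (simp add: vec_eq_iff mult.assoc)

lemma smat_1 [simp]: "smat 1 A = A"
  by (simp add: vec_eq_iff)

lemma vm_smat: "x v* smat k A = k *s (x v* A)"
  by (simp add: vec_eq_iff vector_matrix_mult_def sum_distrib_left mult_ac)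

lemma proj_class_smat: "proj_class M = {smat k M | k. k \<noteq> 0}"
  by (simp add: proj_class_def smat_def)

lemma mat1_mat4: "(mat 1 :: 'a::field^4^4) = mat4 1 0 0 0 0 1 0 0 0 0 1 0 0 0 0 1"
  by (simp add: vec4_eq_iff mat_def)

lemma smat_mat4 [simp]: "smat k (mat4 a11 a12 a13 a14 a21 a22 a23 a24 a31 a32 a33 a34 a41 a42 a43 a44)
  = mat4 (k*a11) (k*a12) (k*a13) (k*a14) (k*a21) (k*a22) (k*a23) (k*a24) (k*a31) (k*a32) (k*a33) (k*a34) (k*a41) (k*a42) (k*a43) (k*a44)"
  by (simp add: vec4_eq_iff)

lemma row_vm: "pt 1 0 0 0 v* M = M $ 1" "pt 0 1 0 0 v* M = M $ 2" "pt 0 0 1 0 v* M = M $ 3" "pt 0 0 0 1 v* M = M $ 4"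
  by (simp_all add: vec_eq_iff vector_matrix_mult_def sum_4)

lemma inv_vm_zero: assumes "A ** B = mat 1" "x v* A = 0" shows "x = 0"
proof -
  have "x = x v* (A ** B)" using assms by simp
  also have "\<dots> = (x v* A) v* B" by (simp add: vector_matrix_mul_assoc)
  finally show ?thesis using assms by simp
qed

section \<open>Lines\<close>

lemma lt_mem: "x \<in> line_through u v \<longleftrightarrow> (\<exists>a b. x = a *s u + b *s v)"
  by (auto simp: line_through_def)

lemma lt_swap: "line_through u v = line_through v u"
  unfolding line_through_def by (auto; metis add.commute)

lemma lt_gen: "u \<in> line_through u v" "v \<in> line_through u v"
  unfolding lt_mem by (rule exI[of _ 1], rule exI[of _ 0], simp, rule exI[of _ 0], rule exI[of _ 1], simp)

lemma lt_smult: assumes "x \<in> line_through u v" shows "k *s x \<in> line_through u v"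
proof -
  obtain a b where "x = a *s u + b *s v" using assms lt_mem by blast
  then have "k *s x = (k*a) *s u + (k*b) *s v" by (simp add: vec_eq_iff algebra_simps)
  then show ?thesis using lt_mem by blast
qed

lemma lt_add: assumes "x \<in> line_through u v" "y \<in> line_through u v" shows "x + y \<in> line_through u v"
proof -
  obtain a b where "x = a *s u + b *s v" using assms lt_mem by blast
  moreover obtain a' b' where "y = a' *s u + b' *s v" using assms lt_mem by blast
  ultimately have "x + y = (a+a') *s u + (b+b') *s v" by (simp add: vec_eq_iff algebra_simps)
  then show ?thesis using lt_mem by blast
qed

lemma lt_zero: "0 \<in> line_through u v"
  using lt_smult[OF lt_gen(1), of 0 u v] by simp

lemma lt_sub: "line_through u v \<subseteq> line_through u' v' \<longleftrightarrow> u \<in> line_through u' v' \<and> v \<in> line_through u' v'"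
proof
  assume "u \<in> line_through u' v' \<and> v \<in> line_through u' v'"
  then show "line_through u v \<subseteq> line_through u' v'"
    by (auto simp: lt_mem[of _ u v] intro!: lt_add lt_smult)
qed (auto intro: lt_gen)

lemma lt_change_aux:
  fixes \<alpha> \<beta> \<gamma> \<delta> x y :: "'a::field"
  assumes "\<alpha> * \<delta> - \<beta> * \<gamma> \<noteq> 0"
  shows "x = (\<delta>/(\<alpha> * \<delta> - \<beta> * \<gamma>)) * (\<alpha> * x + \<beta> * y) + (-\<beta>/(\<alpha> * \<delta> - \<beta> * \<gamma>)) * (\<gamma> * x + \<delta> * y)"
    "y = (-\<gamma>/(\<alpha> * \<delta> - \<beta> * \<gamma>)) * (\<alpha> * x + \<beta> * y) + (\<alpha>/(\<alpha> * \<delta> - \<beta> * \<gamma>)) * (\<gamma> * x + \<delta> * y)"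
proof -
  define D where "D = \<alpha> * \<delta> - \<beta> * \<gamma>"
  have D: "D \<noteq> 0" using assms D_def by simp
  have "x = (\<delta>/D) * (\<alpha> * x + \<beta> * y) + (-\<beta>/D) * (\<gamma> * x + \<delta> * y)"
    using D by (simp add: field_simps) (simp add: D_def algebra_simps)
  moreover have "y = (-\<gamma>/D) * (\<alpha> * x + \<beta> * y) + (\<alpha>/D) * (\<gamma> * x + \<delta> * y)"
    using D by (simp add: field_simps) (simp add: D_def algebra_simps)
  ultimately show "x = (\<delta>/(\<alpha> * \<delta> - \<beta> * \<gamma>)) * (\<alpha> * x + \<beta> * y) + (-\<beta>/(\<alpha> * \<delta> - \<beta> * \<gamma>)) * (\<gamma> * x + \<delta> * y)"
    "y = (-\<gamma>/(\<alpha> * \<delta> - \<beta> * \<gamma>)) * (\<alpha> * x + \<beta> * y) + (\<alpha>/(\<alpha> * \<delta> - \<beta> * \<gamma>)) * (\<gamma> * x + \<delta> * y)"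
    by (simp_all add: D_def)
qed

lemma lt_change:
  fixes u v :: "'a::field^4"
  assumes "\<alpha> * \<delta> - \<beta> * \<gamma> \<noteq> 0"
  shows "line_through (\<alpha> *s u + \<beta> *s v) (\<gamma> *s u + \<delta> *s v) = line_through u v"
proof
  show "line_through (\<alpha> *s u + \<beta> *s v) (\<gamma> *s u + \<delta> *s v) \<subseteq> line_through u v"
    by (simp add: lt_sub lt_add lt_smult lt_gen)
  let ?D = "\<alpha> * \<delta> - \<beta> * \<gamma>"
  have "u = (\<delta>/?D) *s (\<alpha> *s u + \<beta> *s v) + (-\<beta>/?D) *s (\<gamma> *s u + \<delta> *s v)"
    by (simp only: vec_eq_iff vector_add_component vector_smult_component) (intro allI lt_change_aux[OF assms])
  moreover have "v = (-\<gamma>/?D) *s (\<alpha> *s u + \<beta> *s v) + (\<alpha>/?D) *s (\<gamma> *s u + \<delta> *s v)"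
    by (simp only: vec_eq_iff vector_add_component vector_smult_component) (intro allI lt_change_aux[OF assms])
  ultimately show "line_through u v \<subseteq> line_through (\<alpha> *s u + \<beta> *s v) (\<gamma> *s u + \<delta> *s v)"
    unfolding lt_sub by (metis lt_mem)
qed

lemma lt_scale: "k \<noteq> 0 \<Longrightarrow> line_through (k *s u) v = line_through u (v::'a::field^4)"
  using lt_change[of k 1 0 0 u v] by simp

lemma lt_scale2: "k \<noteq> 0 \<Longrightarrow> line_through u (k *s v) = line_through u (v::'a::field^4)"
  using lt_change[of 1 k 0 0 u v] by simp

lemma lt_addmul: "line_through u (v + k *s u) = line_through u (v::'a::field^4)"
  using lt_change[of 1 1 0 k u v] by (simp add: add.commute)

definition img :: "'a::field^4^4 \<Rightarrow> ('a^4) set \<Rightarrow> ('a^4) set" where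
  "img M L = (\<lambda>x. x v* M) ` L"

lemma img_lt: "img M (line_through u v) = line_through (u v* M) (v v* M)"
proof -
  have "\<And>a b. (a *s u + b *s v) v* M = a *s (u v* M) + b *s (v v* M)"
    by (simp add: vector_matrix_left_distrib scalar_vector_matrix_assoc)
  then show ?thesis unfolding img_def line_through_def
    by (auto simp: image_iff) (metis (mono_tags, lifting) mem_Collect_eq)
qed

lemma img_comp: "img B (img A L) = img (A ** B) L"
  by (auto simp: img_def image_image vector_matrix_mul_assoc)

lemma img_smat: "k \<noteq> 0 \<Longrightarrow> img (smat k A) (line_through u v) = img A (line_through u v)"
  by (simp add: img_lt vm_smat lt_scale lt_scale2)

lemma img_mat1: "img (mat 1) L = L"
  by (simp add: img_def)

lemma pmap_class: assumes "L = line_through u v"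
  shows "pmap (proj_class M) L = img M L"
proof
  show "pmap (proj_class M) L \<subseteq> img M L"
  proof
    fix z assume "z \<in> pmap (proj_class M) L"
    then obtain x k where "x \<in> L" "k \<noteq> 0" "z = x v* smat k M"
      by (auto simp: pmap_def proj_class_smat)
    then have "z = (k *s x) v* M" by (simp add: vm_smat scalar_vector_matrix_assoc)
    moreover have "k *s x \<in> L" using \<open>x \<in> L\<close> assms lt_smult by blast
    ultimately show "z \<in> img M L" by (simp add: img_def)
  qed
  show "img M L \<subseteq> pmap (proj_class M) L"
    unfolding img_def pmap_def proj_class_smat by (force intro: exI[of _ 1])
qed

lemma img_inj: assumes "A ** B = mat 1" "img A L = img A L'" shows "L = L'"
proof -
  have "inj (\<lambda>x. x v* A)"
    by (rule injI) (metis assms(1) inv_vm_zero right_minus_eq vector_matrix_mult_diff_distrib)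
  then show ?thesis using assms(2) by (simp add: img_def inj_image_eq_iff)
qed



lemma mat4_eq_iff: "mat4 (a11::'a::field) a12 a13 a14 a21 a22 a23 a24 a31 a32 a33 a34 a41 a42 a43 a44 =
   mat4 b11 b12 b13 b14 b21 b22 b23 b24 b31 b32 b33 b34 b41 b42 b43 b44 \<longleftrightarrow>
   a11 = b11 \<and> a12 = b12 \<and> a13 = b13 \<and> a14 = b14 \<and> a21 = b21 \<and> a22 = b22 \<and> a23 = b23 \<and> a24 = b24 \<and>
   a31 = b31 \<and> a32 = b32 \<and> a33 = b33 \<and> a34 = b34 \<and> a41 = b41 \<and> a42 = b42 \<and> a43 = b43 \<and> a44 = b44"
  by (subst vec4_eq_iff) simp

definition nu :: "'a::field \<Rightarrow> 'a \<Rightarrow> 'a^4" where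
  "nu x y = pt (x^3) (x^2*y) (x*y^2) (y^3)"

definition Tm :: "'a::field \<Rightarrow> 'a \<Rightarrow> 'a \<Rightarrow> 'a \<Rightarrow> 'a^4^4" where
  "Tm a b c d = mat4 (a^3) (a^2*c) (a*c^2) (c^3)
      (3*a^2*b) (a^2*d+2*a*b*c) (b*c^2+2*a*c*d) (3*c^2*d)
      (3*a*b^2) (b^2*c+2*a*b*d) (a*d^2+2*b*c*d) (3*c*d^2)
      (b^3) (b^2*d) (b*d^2) (d^3)"

lemma nu_Tm: "nu x y v* Tm a b c d = nu (a*x+b*y) (c*x+d*y)"
  unfolding nu_def Tm_def vm_mat4 pt_eq_iff by (intro conjI; algebra)

lemma Tm_mult: "Tm a b c d ** Tm a' b' c' d' = Tm (a*a'+c*b') (b*a'+d*b') (a*c'+c*d') (b*c'+d*d')"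
  unfolding Tm_def mm_mat4 mat4_eq_iff by (intro conjI; algebra)

lemma det_mult: "(a*a'+c*b')*(b*c'+d*d') - (b*a'+d*b')*(a*c'+c*d') = (a*d-b*c)*(a'*d'-b'*(c'::'a::field))"
  by algebra

lemma Tm_scalar: "Tm k 0 0 k = smat (k^3) (mat 1)"
  unfolding Tm_def mat1_mat4 smat_mat4 mat4_eq_iff by (simp add: power2_eq_square power3_eq_cube)

lemma Tm_adj: "Tm a b c d ** Tm d (-b) (-c) a = smat ((a*d-b*c)^3) (mat 1)"
  "Tm d (-b) (-c) a ** Tm a b c d = smat ((a*d-b*c)^3) (mat 1)"
proof -
  have "Tm a b c d ** Tm d (-b) (-c) a = Tm (a*d-b*c) 0 0 (a*d-b*c)"
    unfolding Tm_mult by (rule arg_cong2[where f="\<lambda>x y. Tm x y _ _"] | simp add: algebra_simps)+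
  then show "Tm a b c d ** Tm d (-b) (-c) a = smat ((a*d-b*c)^3) (mat 1)" by (simp add: Tm_scalar)
  have "Tm d (-b) (-c) a ** Tm a b c d = Tm (a*d-b*c) 0 0 (a*d-b*c)"
    unfolding Tm_mult by (rule arg_cong2[where f="\<lambda>x y. Tm x y _ _"] | simp add: algebra_simps)+
  then show "Tm d (-b) (-c) a ** Tm a b c d = smat ((a*d-b*c)^3) (mat 1)" by (simp add: Tm_scalar)
qed

lemma smat_mat1_mult: "smat k (mat 1) ** A = smat k A" "A ** smat k (mat 1) = smat k A"
  by (simp_all add: smat_mult_left smat_mult_right)

lemma Tm_inv: assumes "a*d-b*c \<noteq> 0"
  shows "Tm a b c d ** smat (1/(a*d-b*c)^3) (Tm d (-b) (-c) a) = mat 1"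
        "smat (1/(a*d-b*c)^3) (Tm d (-b) (-c) a) ** Tm a b c d = mat 1"
  using assms by (simp_all add: smat_mult_left smat_mult_right Tm_adj)

lemma Tm_invertible: "a*d-b*c \<noteq> 0 \<Longrightarrow> invertible (Tm a b c d)"
  unfolding invertible_def using Tm_inv by blast


lemma cpt_nu: "cpt (Some t) = nu t 1" "cpt None = nu 1 0"
  by (simp_all add: nu_def)

lemma nu_scale: "nu (l*x) (l*y) = l^3 *s nu x y"
  unfolding nu_def smult_pt pt_eq_iff by (intro conjI; algebra)

lemma nu_cubic: assumes "x \<noteq> 0 \<or> y \<noteq> 0" "k \<noteq> 0" shows "k *s nu x y \<in> cubic_vecs"
proof (cases "y = 0")
  case True
  then have "k *s nu x y = (k*x^3) *s cpt None" by (simp add: nu_def)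
  moreover have "k*x^3 \<noteq> 0" using assms True by simp
  ultimately show ?thesis unfolding cubic_vecs_def by blast
next
  case False
  have "nu x y = nu (y*(x/y)) (y*1)" using False by simp
  also have "\<dots> = y^3 *s cpt (Some (x/y))" by (simp only: nu_scale cpt_nu)
  finally have "k *s nu x y = (k*y^3) *s cpt (Some (x/y))" by (simp add: vector_smult_assoc)
  moreover have "k*y^3 \<noteq> 0" using assms False by simp
  ultimately show ?thesis unfolding cubic_vecs_def by blast
qed

lemma cubic_nu: assumes "v \<in> cubic_vecs"
  obtains k x y where "k \<noteq> 0" "x \<noteq> 0 \<or> y \<noteq> 0" "v = k *s nu x y"
proof -
  obtain k t where kt: "k \<noteq> 0" "v = k *s cpt t" using assms unfolding cubic_vecs_def by blast
  show ?thesis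
  proof (cases t)
    case None
    then have "v = k *s nu 1 0" using kt by (simp only: cpt_nu)
    then show ?thesis by (intro that[OF kt(1), of 1 0]) simp_all
  next
    case (Some s)
    then have "v = k *s nu s 1" using kt by (simp only: cpt_nu)
    then show ?thesis by (intro that[OF kt(1), of s 1]) simp_all
  qed
qed

lemma quadrics: assumes "v \<in> cubic_vecs"
  shows "(v$2)^2 = (v$1) * (v$3)" "(v$3)^2 = (v$2) * (v$4)" "(v$1) * (v$4) = (v$2) * (v$3)"
proof -
  obtain k x y where v: "v = k *s nu x y" using cubic_nu[OF assms] by metis
  show "(v$2)^2 = (v$1) * (v$3)" unfolding v by (simp add: nu_def) algebra
  show "(v$3)^2 = (v$2) * (v$4)" unfolding v by (simp add: nu_def) algebra
  show "(v$1) * (v$4) = (v$2) * (v$3)" unfolding v by (simp add: nu_def) algebra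
qed

lemma det_nz: assumes "x \<noteq> 0 \<or> y \<noteq> 0" "a*d-b*c \<noteq> 0"
  shows "a*x+b*y \<noteq> 0 \<or> c*x+d*(y::'a::field) \<noteq> 0"
proof (rule ccontr)
  assume "\<not> ?thesis"
  then have h: "a*x+b*y = 0" "c*x+d*y = 0" by auto
  have "(a*d-b*c)*x = d*(a*x+b*y) - b*(c*x+d*y)" by algebra
  moreover have "(a*d-b*c)*y = a*(c*x+d*y) - c*(a*x+b*y)" by algebra
  ultimately have "(a*d-b*c)*x = 0" "(a*d-b*c)*y = 0" using h by simp_all
  then show False using assms by simp
qed

lemma Tm_cubic_sub: assumes "a*d-b*c \<noteq> 0" "v \<in> cubic_vecs" shows "v v* Tm a b c d \<in> cubic_vecs"
proof -
  obtain k x y where kxy: "k \<noteq> 0" "x \<noteq> 0 \<or> y \<noteq> 0" "v = k *s nu x y" using cubic_nu[OF assms(2)] by metis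
  then have "v v* Tm a b c d = k *s nu (a*x+b*y) (c*x+d*y)"
    by (simp add: scalar_vector_matrix_assoc nu_Tm)
  then show ?thesis using nu_cubic det_nz[OF kxy(2) assms(1)] kxy(1) by simp
qed

lemma Tm_cubic: assumes "a*d-b*c \<noteq> 0" shows "(\<lambda>x. x v* Tm a b c d) ` cubic_vecs = cubic_vecs"
proof
  show "(\<lambda>x. x v* Tm a b c d) ` cubic_vecs \<subseteq> cubic_vecs" using Tm_cubic_sub[OF assms] by blast
  show "cubic_vecs \<subseteq> (\<lambda>x. x v* Tm a b c d) ` cubic_vecs"
  proof
    fix v :: "'a^4" assume "v \<in> cubic_vecs"
    then obtain k x y where kxy: "k \<noteq> 0" "x \<noteq> 0 \<or> y \<noteq> 0" "v = k *s nu x y" using cubic_nu by metis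
    define D where "D = a*d-b*c"
    have D: "D \<noteq> 0" using assms D_def by simp
    have e1: "a*(d*x-b*y) + b*(a*y-c*x) = D*x" "c*(d*x-b*y) + d*(a*y-c*x) = D*y"
      unfolding D_def by algebra+
    have nz: "d*x-b*y \<noteq> 0 \<or> a*y-c*x \<noteq> 0"
    proof (rule ccontr)
      assume "\<not> ?thesis"
      then have h: "d*x-b*y = 0" "a*y-c*x = 0" by auto
      have "D*x = a*(d*x-b*y) + b*(a*y-c*x)" "D*y = c*(d*x-b*y) + d*(a*y-c*x)" using e1 by simp_all
      then have "D*x = 0" "D*y = 0" using h by simp_all
      then show False using D kxy(2) by simp
    qed
    have "((k/D^3) *s nu (d*x-b*y) (a*y-c*x)) v* Tm a b c d = (k/D^3) *s nu (D*x) (D*y)"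
      by (simp add: scalar_vector_matrix_assoc nu_Tm e1)
    also have "\<dots> = v" using D kxy(3) by (simp add: nu_scale vector_smult_assoc)
    finally have "v = ((k/D^3) *s nu (d*x-b*y) (a*y-c*x)) v* Tm a b c d" by simp
    moreover have "(k/D^3) *s nu (d*x-b*y) (a*y-c*x) \<in> cubic_vecs"
      using nu_cubic[OF nz] D kxy(1) by simp
    ultimately show "v \<in> (\<lambda>x. x v* Tm a b c d) ` cubic_vecs" by blast
  qed
qed

lemma Tm_Gq: "a*d-b*c \<noteq> 0 \<Longrightarrow> proj_class (Tm a b c d) \<in> (Gq :: ('a::{field,finite}^4^4) set set)"
  unfolding Gq_def mem_Collect_eq by (rule exI[of _ "Tm a b c d"]) (simp add: Tm_invertible Tm_cubic)

lemma poly5: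
  fixes c0 c1 c2 c3 c4 c5 :: "'a::{field,finite}"
  assumes "CARD('a) > 5" "\<forall>t. c0 + c1*t + c2*t^2 + c3*t^3 + c4*t^4 + c5*t^5 = 0"
  shows "c0 = 0 \<and> c1 = 0 \<and> c2 = 0 \<and> c3 = 0 \<and> c4 = 0 \<and> c5 = 0"
proof -
  define p where "p = [:c0, c1, c2, c3, c4, c5:]"
  have ev: "poly p t = c0 + c1*t + c2*t^2 + c3*t^3 + c4*t^4 + c5*t^5" for t
  proof -
    have "poly p t = c0 + t*(c1 + t*(c2 + t*(c3 + t*(c4 + t*c5))))" by (simp add: p_def)
    also have "\<dots> = c0 + c1*t + c2*t^2 + c3*t^3 + c4*t^4 + c5*t^5" by algebra
    finally show ?thesis .
  qed
  have "p = 0"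
  proof (rule ccontr)
    assume "p \<noteq> 0"
    then have "card {t. poly p t = 0} \<le> degree p" by (rule card_poly_roots_bound)
    moreover have "{t. poly p t = 0} = UNIV" using assms(2) ev by auto
    moreover have "degree p \<le> 5"
      unfolding p_def by (simp add: degree_pCons_eq_if)
    ultimately show False using assms(1) by simp
  qed
  then show ?thesis by (simp add: p_def)
qed



lemma vm_rows: "pt x1 x2 x3 x4 v* M = x1 *s M$1 + x2 *s M$2 + x3 *s M$3 + x4 *s M$4"
  by (simp add: vec_eq_iff vector_matrix_mult_def sum_4 mult.commute)

lemma Gq_char:
  fixes M :: "'a::{field,finite}^4^4"
  assumes card: "CARD('a) > 5" and inv: "invertible M" and cub: "(\<lambda>x. x v* M) ` cubic_vecs = cubic_vecs"
  shows "\<exists>a b c d k. k \<noteq> 0 \<and> a*d-b*c \<noteq> 0 \<and> M = smat k (Tm a b c d)"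
proof -
  obtain Mi where Mi: "M ** Mi = mat 1" using inv unfolding invertible_def by blast
  have cubM: "x \<in> cubic_vecs \<Longrightarrow> x v* M \<in> cubic_vecs" for x using cub by blast
  have "pt 1 0 0 0 \<in> (cubic_vecs::('a^4) set)" using nu_cubic[of "1::'a" 0 1] by (simp add: nu_def)
  then have "M$1 \<in> cubic_vecs" using cubM row_vm(1) by metis
  then obtain k1 p1 p2 where P: "k1 \<noteq> 0" "p1 \<noteq> 0 \<or> p2 \<noteq> 0" "M$1 = k1 *s nu p1 p2" by (rule cubic_nu)
  have "pt 0 0 0 1 \<in> (cubic_vecs::('a^4) set)" using nu_cubic[of "0::'a" 1 1] by (simp add: nu_def)
  then have "M$4 \<in> cubic_vecs" using cubM row_vm(4) by metis
  then obtain k4 r1 r2 where R: "k4 \<noteq> 0" "r1 \<noteq> 0 \<or> r2 \<noteq> 0" "M$4 = k4 *s nu r1 r2" by (rule cubic_nu)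
  define D where "D = p1*r2 - p2*r1"
  have D: "D \<noteq> 0"
  proof
    assume D0: "D = 0"
    obtain l where l: "r1 = l*p1" "r2 = l*p2"
    proof (cases "p1 = 0")
      case True
      then have "p2 \<noteq> 0" using P by simp
      moreover have "r1 = 0" using D0 True \<open>p2\<noteq>0\<close> by (simp add: D_def)
      ultimately show ?thesis using True by (intro that[of "r2/p2"]) simp_all
    next
      case False
      have "p1*r2 = p2*r1" using D0 by (simp add: D_def)
      then have "r2 = (r1/p1)*p2" using False by (simp add: field_simps)
      then show ?thesis using False by (intro that[of "r1/p1"]) simp_all
    qed
    have "pt (k4*l^3) 0 0 (-k1) v* M = 0"
      unfolding vm_rows P(3) R(3) l nu_scale by (simp add: nu_def vec4_eq_iff algebra_simps)
    then have "pt (k4*l^3) 0 0 (-k1) = 0" using inv_vm_zero[OF Mi] by blast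
    then show False using P(1) by simp
  qed
  define B where "B = Tm r2 (-r1) p2 (-p1)"
  have detB: "r2*(-p1) - (-r1)*p2 \<noteq> 0" using D by (simp add: D_def algebra_simps)
  define N where "N = M ** B"
  have rowN: "x v* N = (x v* M) v* B" for x by (simp add: N_def vector_matrix_mul_assoc)
  have N1: "N$1 = pt (k1*D^3) 0 0 0"
  proof -
    have "N$1 = (k1 *s nu p1 p2) v* B" using rowN[of "pt 1 0 0 0"] by (simp add: row_vm P(3))
    also have "\<dots> = k1 *s nu (r2*p1 + (-r1)*p2) (p2*p1 + (-p1)*p2)"
      by (simp add: B_def scalar_vector_matrix_assoc nu_Tm)
    also have "\<dots> = pt (k1*D^3) 0 0 0" by (simp add: nu_def D_def algebra_simps)
    finally show ?thesis .
  qed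
  have N4: "N$4 = pt 0 0 0 (-(k4*D^3))"
  proof -
    have "N$4 = (k4 *s nu r1 r2) v* B" using rowN[of "pt 0 0 0 1"] by (simp add: row_vm R(3))
    also have "\<dots> = k4 *s nu (r2*r1 + (-r1)*r2) (p2*r1 + (-p1)*r2)"
      by (simp add: B_def scalar_vector_matrix_assoc nu_Tm)
    also have "\<dots> = pt 0 0 0 (-(k4*D^3))" unfolding nu_def D_def by simp algebra
    finally show ?thesis .
  qed
  have cubN: "pt (t^3) (t^2) t 1 v* N \<in> cubic_vecs" for t
  proof -
    have "pt (t^3) (t^2) t 1 = cpt (Some t)" by simp
    also have "\<dots> \<in> cubic_vecs" using nu_cubic[of t 1 1] by (simp add: nu_def)
    finally have "pt (t^3) (t^2) t 1 v* M \<in> cubic_vecs" by (rule cubM)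
    then show ?thesis unfolding rowN B_def using Tm_cubic_sub[OF detB] by blast
  qed
  define K1 where "K1 = k1*D^3"
  define K4 where "K4 = -(k4*D^3)"
  define a2 where "a2 = N$2$1" define b2 where "b2 = N$2$2" define c2 where "c2 = N$2$3" define d2 where "d2 = N$2$4"
  define a3 where "a3 = N$3$1" define b3 where "b3 = N$3$2" define c3 where "c3 = N$3$3" define d3 where "d3 = N$3$4"
  have K1: "K1 \<noteq> 0" using P(1) D by (simp add: K1_def)
  have K4: "K4 \<noteq> 0" using R(1) D by (simp add: K4_def)
  have Neq: "N = mat4 K1 0 0 0 a2 b2 c2 d2 a3 b3 c3 d3 0 0 0 K4"
    by (subst mat4_eta) (simp add: N1 N4 K1_def K4_def a2_def b2_def c2_def d2_def a3_def b3_def c3_def d3_def)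
  have vt: "pt (t^3) (t^2) t 1 v* N = pt (K1*t^3 + a2*t^2 + a3*t) (b2*t^2 + b3*t) (c2*t^2 + c3*t) (d2*t^2 + d3*t + K4)" for t
    unfolding Neq vm_mat4 pt_eq_iff by (intro conjI; algebra)
  have Q: "(b2*t^2 + b3*t)^2 = (K1*t^3 + a2*t^2 + a3*t) * (c2*t^2 + c3*t)"
          "(c2*t^2 + c3*t)^2 = (b2*t^2 + b3*t) * (d2*t^2 + d3*t + K4)"
          "(K1*t^3 + a2*t^2 + a3*t) * (d2*t^2 + d3*t + K4) = (b2*t^2 + b3*t) * (c2*t^2 + c3*t)" for t
    using quadrics[OF cubN[of t]] unfolding vt by simp_all
  have E1: "\<forall>t. 0 + 0*t + (a3*c3 - b3^2)*t^2 + (a2*c3 + a3*c2 - 2*b2*b3)*t^3 + (K1*c3 + a2*c2 - b2^2)*t^4 + (K1*c2)*t^5 = 0"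
  proof
    fix t show "0 + 0*t + (a3*c3 - b3^2)*t^2 + (a2*c3 + a3*c2 - 2*b2*b3)*t^3 + (K1*c3 + a2*c2 - b2^2)*t^4 + (K1*c2)*t^5 = 0"
      using Q(1)[of t] by algebra
  qed
  have E2: "\<forall>t. 0 + (K4*b3)*t + (K4*b2 + b3*d3 - c3^2)*t^2 + (b2*d3 + b3*d2 - 2*c2*c3)*t^3 + (b2*d2 - c2^2)*t^4 + 0*t^5 = 0"
  proof
    fix t show "0 + (K4*b3)*t + (K4*b2 + b3*d3 - c3^2)*t^2 + (b2*d3 + b3*d2 - 2*c2*c3)*t^3 + (b2*d2 - c2^2)*t^4 + 0*t^5 = 0"
      using Q(2)[of t] by algebra
  qed
  have E3: "\<forall>t. 0 + (K4*a3)*t + (K4*a2 + a3*d3 - b3*c3)*t^2 + (K1*K4 + a2*d3 + a3*d2 - b2*c3 - b3*c2)*t^3 + (K1*d3 + a2*d2 - b2*c2)*t^4 + (K1*d2)*t^5 = 0"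
  proof
    fix t show "0 + (K4*a3)*t + (K4*a2 + a3*d3 - b3*c3)*t^2 + (K1*K4 + a2*d3 + a3*d2 - b2*c3 - b3*c2)*t^3 + (K1*d3 + a2*d2 - b2*c2)*t^4 + (K1*d2)*t^5 = 0"
      using Q(3)[of t] by algebra
  qed
  note C1 = poly5[OF card E1] and C2 = poly5[OF card E2] and C3 = poly5[OF card E3]
  have z: "c2 = 0" "b3 = 0" "d2 = 0" "a3 = 0" using C1 C2 C3 K1 K4 by auto
  have z2: "d3 = 0" "a2 = 0" using C3 K1 K4 z by auto
  have r: "K1*c3 = b2^2" "K4*b2 = c3^2" "K1*K4 = b2*c3" using C1 C2 C3 z z2 by auto
  have b2: "b2 \<noteq> 0" using r(3) K1 K4 by auto
  define \<delta> where "\<delta> = b2/K1"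
  have \<delta>: "\<delta> \<noteq> 0" using b2 K1 by (simp add: \<delta>_def)
  have "N = smat K1 (Tm 1 0 0 \<delta>)"
  proof -
    have "K1*\<delta>^2 = c3" using r(1) K1 by (simp add: \<delta>_def power2_eq_square field_simps)
    moreover have "K1*\<delta>^3 = K4"
    proof -
      have "K1*\<delta>^3 = b2 * b2^2 / K1^2" using K1 by (simp add: \<delta>_def power3_eq_cube power2_eq_square field_simps)
      also have "\<dots> = b2 * (K1*c3) / K1^2" using r(1) by simp
      also have "\<dots> = K4" using r(3) K1 by (simp add: power2_eq_square field_simps)
      finally show ?thesis .
    qed
    moreover have "K1*\<delta> = b2" using K1 by (simp add: \<delta>_def)
    ultimately show ?thesis unfolding Neq Tm_def smat_mat4 mat4_eq_iff using z z2 by simp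
  qed
  define e where "e = (r2*(-p1) - (-r1)*p2)^3"
  have e: "e \<noteq> 0" using detB by (simp add: e_def)
  have BB: "B ** Tm (-p1) r1 (-p2) r2 = smat e (mat 1)"
    using Tm_adj(1)[of r2 "-r1" p2 "-p1"] by (simp add: B_def e_def)
  have "N ** Tm (-p1) r1 (-p2) r2 = smat e M"
  proof -
    have "N ** Tm (-p1) r1 (-p2) r2 = M ** (B ** Tm (-p1) r1 (-p2) r2)" by (simp add: N_def matrix_mul_assoc)
    then show ?thesis by (simp add: BB smat_mat1_mult)
  qed
  then have "M = smat (1/e) (N ** Tm (-p1) r1 (-p2) r2)" using e by (simp add: smat_mult_left)
  also have "\<dots> = smat (K1/e) (Tm 1 0 0 \<delta> ** Tm (-p1) r1 (-p2) r2)"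
    using \<open>N = smat K1 (Tm 1 0 0 \<delta>)\<close> by (simp add: smat_mult_left)
  also have "\<dots> = smat (K1/e) (Tm (1*(-p1)+0*r1) (0*(-p1)+\<delta>*r1) (1*(-p2)+0*r2) (0*(-p2)+\<delta>*r2))"
    by (simp only: Tm_mult)
  finally have "M = smat (K1/e) (Tm (1*(-p1)+0*r1) (0*(-p1)+\<delta>*r1) (1*(-p2)+0*r2) (0*(-p2)+\<delta>*r2))" .
  moreover have "(1*(-p1)+0*r1)*(0*(-p2)+\<delta>*r2) - (0*(-p1)+\<delta>*r1)*(1*(-p2)+0*r2) \<noteq> 0"
  proof -
    have "(1*(-p1)+0*r1)*(0*(-p2)+\<delta>*r2) - (0*(-p1)+\<delta>*r1)*(1*(-p2)+0*r2) = - (\<delta> * D)"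
      by (simp add: D_def algebra_simps)
    then show ?thesis using \<delta> D by simp
  qed
  moreover have "K1/e \<noteq> 0" using K1 e by simp
  ultimately show ?thesis by blast
qed


lemma proj_class_smat_eq: assumes "k \<noteq> 0" shows "proj_class (smat k A) = proj_class A"
proof -
  have "smat j (smat k A) \<in> proj_class A" if "j \<noteq> 0" for j
    using that assms unfolding proj_class_smat by (auto intro!: exI[of _ "j*k"])
  moreover have "smat j A \<in> proj_class (smat k A)" if "j \<noteq> 0" for j
  proof -
    have "smat j A = smat (j/k) (smat k A)" using assms by simp
    moreover have "j/k \<noteq> 0" using that assms by simp
    ultimately show ?thesis unfolding proj_class_smat by blast
  qed
  ultimately show ?thesis unfolding proj_class_smat[of "smat k A"] proj_class_smat[of A] by blast
qed

lemma Gq_eq: assumes "CARD('a::{field,finite}) > 5"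
  shows "(Gq :: ('a^4^4) set set) = {proj_class (Tm a b c d) | a b c d. a*d-b*c \<noteq> 0}"
proof
  show "(Gq :: ('a^4^4) set set) \<subseteq> {proj_class (Tm a b c d) | a b c d. a*d-b*c \<noteq> 0}"
  proof
    fix \<phi> :: "('a^4^4) set" assume "\<phi> \<in> Gq"
    then obtain M where M: "\<phi> = proj_class M" "invertible M" "(\<lambda>x. x v* M) ` cubic_vecs = cubic_vecs"
      unfolding Gq_def by blast
    then obtain a b c d k where "k \<noteq> 0" "a*d-b*c \<noteq> 0" "M = smat k (Tm a b c d)"
      using Gq_char[OF assms] by blast
    then show "\<phi> \<in> {proj_class (Tm a b c d) | a b c d. a*d-b*c \<noteq> 0}"
      using M(1) proj_class_smat_eq by blast
  qed
  show "{proj_class (Tm a b c d) | a b c d. a*d-b*c \<noteq> 0} \<subseteq> (Gq :: ('a^4^4) set set)"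
    using Tm_Gq by blast
qed

lemma orbit_eq: assumes "CARD('a::{field,finite}) > 5" "L = line_through u (v::'a^4)"
  shows "orbit_Gq L = {img (Tm a b c d) L | a b c d. a*d-b*c \<noteq> 0}"
  unfolding orbit_Gq_def Gq_eq[OF assms(1)] using pmap_class[OF assms(2)] by blast

lemma stab_eq: assumes "CARD('a::{field,finite}) > 5" "L = line_through u (v::'a^4)"
  shows "stab_Gq L = {proj_class (Tm a b c d) | a b c d. a*d-b*c \<noteq> 0 \<and> img (Tm a b c d) L = L}"
  unfolding stab_Gq_def Gq_eq[OF assms(1)] using pmap_class[OF assms(2)] by blast

lemma Tm_hom: "Tm (l*a) (l*b) (l*c) (l*d) = smat (l^3) (Tm a b c d)"
  unfolding Tm_def smat_mat4 mat4_eq_iff by (intro conjI; algebra)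

lemma proj_class_self: "M \<in> proj_class M"
  unfolding proj_class_smat by (auto intro!: exI[of _ 1])



definition osc_h :: "'a::field \<Rightarrow> 'a \<Rightarrow> 'a^4" where
  "osc_h x y = pt (y^3) (-3*x*y^2) (3*x^2*y) (-(x^3))"

definition tan_h :: "'a::field \<Rightarrow> 'a \<Rightarrow> ('a^4) set" where
  "tan_h x y = line_through (pt (3*x^2) (2*x*y) (y^2) 0) (pt 0 (x^2) (2*x*y) (3*y^2))"

fun hom :: "'a::field option \<Rightarrow> 'a \<times> 'a" where
  "hom (Some t) = (t, 1)" | "hom None = (1, 0)"

lemma lt_change_pt: assumes "u' = \<alpha> *s u + \<beta> *s v" "v' = \<gamma> *s u + \<delta> *s v" "\<alpha> * \<delta> - \<beta> * \<gamma> \<noteq> 0"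
  shows "line_through u' v' = line_through u (v::'a::field^4)"
  using lt_change[OF assms(3)] assms(1,2) by simp

lemma pdot_smult: "pdot (k *s c) x = k * pdot c x"
  by (simp add: pdot_def sum_distrib_left mult.assoc)

lemma pdot_smult2: "pdot c (k *s x) = k * pdot c x"
  by (simp add: pdot_def sum_distrib_left mult_ac)

lemma lip_smult: "k \<noteq> 0 \<Longrightarrow> line_in_plane L (k *s c) \<longleftrightarrow> line_in_plane L c"
  by (simp add: line_in_plane_def pdot_smult)

lemma osc_hom: "osc t = (case t of None \<Rightarrow> (-1) *s osc_h 1 0 | Some s \<Rightarrow> osc_h s 1)"
  by (cases t) (simp_all add: osc_h_def)

lemma lip_neg: "line_in_plane L (- c) \<longleftrightarrow> line_in_plane L c"
proof -
  have "- c = (-1) *s c" by (simp add: vec_eq_iff)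
  then show ?thesis using lip_smult[of "-1" L c] by simp
qed

lemma lip_osc_hom: "line_in_plane L (osc t) \<longleftrightarrow> line_in_plane L (osc_h (fst (hom t)) (snd (hom t)))"
  by (cases t) (simp_all add: osc_hom lip_neg)

lemma cpt_hom: "cpt t = nu (fst (hom t)) (snd (hom t))"
  by (cases t) (simp_all add: nu_def)

lemma hom_nz: "fst (hom t) \<noteq> 0 \<or> snd (hom t) \<noteq> 0"
  by (cases t) simp_all

lemma hom_surj: assumes "x \<noteq> 0 \<or> y \<noteq> (0::'a::field)"
  obtains t l where "l \<noteq> 0" "x = l * fst (hom t)" "y = l * snd (hom t)"
proof (cases "y = 0")
  case True then show ?thesis using assms that[of x None] by simp
next
  case False then show ?thesis using that[of y "Some (x/y)"] by simp
qed

lemma hom_prop: assumes "fst (hom t) * snd (hom s) = fst (hom s) * snd (hom t)" shows "t = s"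
  using assms by (cases t; cases s) simp_all

lemma osc_nu: "pdot (osc_h x y) (nu p q) = (y*p - x*q)^3"
  unfolding osc_h_def nu_def pdot_pt by algebra

lemma pdot_neg: "pdot (- c) x = - pdot c x"
  by (simp add: pdot_def sum_negf)

lemma osc_cpt: "pdot (osc t) (cpt r) = 0 \<longleftrightarrow> r = t"
proof -
  have "pdot (osc t) (cpt r) = (if t = None then -1 else 1) * (snd (hom t) * fst (hom r) - fst (hom t) * snd (hom r))^3"
    by (cases t) (simp_all add: osc_hom cpt_hom pdot_smult osc_nu pdot_neg)
  then have "pdot (osc t) (cpt r) = 0 \<longleftrightarrow> fst (hom r) * snd (hom t) = fst (hom t) * snd (hom r)"
    by (simp add: mult.commute)
  also have "\<dots> \<longleftrightarrow> r = t" using hom_prop by blast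
  finally show ?thesis .
qed

lemma cpt_nz: "cpt t \<noteq> 0"
  by (cases t) simp_all

lemma tangent_hom: assumes "(3::'a::field) \<noteq> 0"
  shows "tangent t = tan_h (fst (hom t)) (snd (hom (t::'a option)))"
proof (cases t)
  case None
  have "{x::'a^4. x $ 3 = 0 \<and> x $ 4 = 0} = line_through (pt 3 0 0 0) (pt 0 1 0 0)"
  proof (intro set_eqI iffI)
    fix x :: "'a^4" assume "x \<in> {x. x $ 3 = 0 \<and> x $ 4 = 0}"
    then have "x = (x$1/3) *s pt 3 0 0 0 + (x$2) *s pt 0 1 0 0" using assms by (simp add: vec4_eq_iff)
    then show "x \<in> line_through (pt 3 0 0 0) (pt 0 1 0 0)" unfolding lt_mem by blast
  qed (auto simp: lt_mem)
  then show ?thesis using None by (simp add: tan_h_def)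
next
  case (Some r)
  have "line_through (pt (r^3) (r^2) r 1) (pt (3*r^2) (2*r) 1 0) =
        line_through (pt (3*r^2) (2*r*1) (1^2) 0) (pt 0 (r^2) (2*r*1) (3*1^2))"
    by (rule lt_change_pt[where \<alpha>="r/3" and \<beta>="1/3" and \<gamma>=1 and \<delta>=0]) (use assms in \<open>simp_all add: field_simps power2_eq_square power3_eq_cube\<close>)
  then show ?thesis using Some by (simp add: tan_h_def)
qed

lemma nu_in_tan: assumes "(3::'a::field) \<noteq> 0" shows "nu x y \<in> tan_h x (y::'a)"
proof -
  have "nu x y = (x/3) *s pt (3*x^2) (2*x*y) (y^2) 0 + (y/3) *s pt 0 (x^2) (2*x*y) (3*y^2)"
    using assms by (simp add: nu_def field_simps power2_eq_square power3_eq_cube)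
  then show ?thesis unfolding tan_h_def lt_mem by blast
qed

lemma tan_scale: assumes "l \<noteq> 0" shows "tan_h (l*x) (l*y) = tan_h x (y::'a::field)"
  unfolding tan_h_def
  by (rule lt_change_pt[where \<alpha>="l^2" and \<beta>=0 and \<gamma>=0 and \<delta>="l^2"]) (use assms in \<open>simp_all add: power2_eq_square mult_ac\<close>)

lemma osc_scale: "osc_h (l*x) (l*y) = l^3 *s osc_h x y"
  unfolding osc_h_def smult_pt pt_eq_iff by (intro conjI; algebra)

lemma tan_Tm: assumes "a*d-b*c \<noteq> 0"
  shows "img (Tm a b c d) (tan_h x y) = tan_h (a*x+b*y) (c*x+d*y)"
  unfolding tan_h_def img_lt
  by (rule lt_change_pt[where \<alpha>=a and \<beta>=c and \<gamma>=b and \<delta>=d]) (unfold Tm_def vm_mat4 smult_pt add_pt pt_eq_iff, (intro conjI; algebra)+, use assms in \<open>simp add: mult.commute\<close>)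

lemma osc_Tm: "pdot (osc_h (a*x+b*y) (c*x+d*y)) (v v* Tm a b c d) = (a*d-b*c)^3 * pdot (osc_h x y) v"
proof -
  obtain v1 v2 v3 v4 where v: "v = pt v1 v2 v3 v4" using pt_eta by blast
  show ?thesis unfolding v osc_h_def Tm_def vm_mat4 pdot_pt by algebra
qed



definition UG :: "'a::field \<Rightarrow> 'a \<Rightarrow> ('a^4) set \<Rightarrow> bool" where
  "UG x y L \<longleftrightarrow> (x \<noteq> 0 \<or> y \<noteq> 0) \<and> nu x y \<in> L \<and> line_in_plane L (osc_h x y) \<and> L \<noteq> tan_h x y"

lemma is_line_closed: "is_line L \<Longrightarrow> x \<in> L \<Longrightarrow> k *s x \<in> L"
  unfolding is_line_def using lt_smult by blast

lemma UG_scale: assumes "is_line L" "l \<noteq> 0" shows "UG (l*x) (l*y) L \<longleftrightarrow> UG x y L"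
proof -
  have "nu (l*x) (l*y) \<in> L \<longleftrightarrow> nu x y \<in> L"
  proof
    assume "nu (l*x) (l*y) \<in> L"
    then have "(1/l^3) *s nu (l*x) (l*y) \<in> L" using is_line_closed[OF assms(1)] by blast
    then show "nu x y \<in> L" using assms(2) by (simp add: nu_scale vector_smult_assoc)
  next
    assume "nu x y \<in> L"
    then show "nu (l*x) (l*y) \<in> L" using is_line_closed[OF assms(1)] by (simp add: nu_scale)
  qed
  then show ?thesis using assms(2) by (simp add: UG_def osc_scale lip_smult tan_scale)
qed

lemma three: "(2::'a::field) = 0 \<Longrightarrow> (3::'a) = 1"
proof -
  assume "(2::'a) = 0"
  moreover have "(3::'a) = 2 + 1" by simp
  ultimately show ?thesis by simp
qed

lemma UGamma_iff: assumes two: "(2::'a::{field,finite}) = 0"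
  shows "UGamma_line (L::('a^4) set) \<longleftrightarrow> is_line L \<and> (\<exists>x y. UG x y L)"
proof
  have three: "(3::'a) \<noteq> 0" using three[OF two] by simp
  assume U: "UGamma_line L"
  then have isl: "is_line L" and c1: "card {t. on_line (cpt t) L} = 1" and nt: "\<forall>t. L \<noteq> tangent t"
    and "\<exists>t. line_in_plane L (osc t)" unfolding UGamma_line_def by blast+
  then obtain t where lip: "line_in_plane L (osc t)" by blast
  obtain t0 where "{t. on_line (cpt t) L} = {t0}" using c1 card_1_singletonE by blast
  then have "cpt t0 \<in> L" unfolding on_line_def by blast
  then have "pdot (osc t) (cpt t0) = 0" using lip unfolding line_in_plane_def by blast
  then have "t0 = t" using osc_cpt by blast
  then have "UG (fst (hom t)) (snd (hom t)) L"
    unfolding UG_def using hom_nz \<open>cpt t0 \<in> L\<close> lip nt tangent_hom[OF three]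
    by (simp add: cpt_hom lip_osc_hom[symmetric])
  then show "is_line L \<and> (\<exists>x y. UG x y L)" using isl by blast
next
  have three: "(3::'a) \<noteq> 0" using three[OF two] by simp
  assume "is_line L \<and> (\<exists>x y. UG x y L)"
  then obtain x y where isl: "is_line L" and ug: "UG x y L" by blast
  then obtain t l where tl: "l \<noteq> 0" "x = l * fst (hom t)" "y = l * snd (hom t)"
    using hom_surj unfolding UG_def by metis
  then have ug': "UG (fst (hom t)) (snd (hom t)) L" using UG_scale[OF isl tl(1)] ug by simp
  then have ct: "cpt t \<in> L" and lip: "line_in_plane L (osc t)" and ntan: "L \<noteq> tangent t"
    unfolding UG_def by (simp_all add: cpt_hom lip_osc_hom tangent_hom[OF three])
  have onl: "on_line (cpt s) L \<longleftrightarrow> s = t" for s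
  proof
    assume "on_line (cpt s) L"
    then have "pdot (osc t) (cpt s) = 0" using lip unfolding on_line_def line_in_plane_def by blast
    then show "s = t" using osc_cpt by blast
  qed (use ct cpt_nz in \<open>simp add: on_line_def\<close>)
  then have "{s. on_line (cpt s) L} = {t}" by blast
  then have "card {s. on_line (cpt s) L} = 1" by simp
  moreover have "\<forall>s. L \<noteq> tangent s"
  proof (intro allI notI)
    fix s assume "L = tangent s"
    moreover have "cpt s \<in> tangent s" using nu_in_tan[OF three] by (simp add: cpt_hom tangent_hom[OF three])
    ultimately have "on_line (cpt s) L" using cpt_nz by (simp add: on_line_def)
    then have "s = t" using onl by blast
    then show False using ntan \<open>L = tangent s\<close> by simp
  qed
  ultimately show "UGamma_line L" unfolding UGamma_line_def using isl lip by blast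
qed

lemma Tm_vm_inj: assumes "a*d-b*c \<noteq> 0" "x v* Tm a b c d = 0" shows "x = 0"
  using inv_vm_zero[OF Tm_inv(1)[OF assms(1)] assms(2)] .

lemma is_line_img: assumes "a*d-b*c \<noteq> 0" "is_line L" shows "is_line (img (Tm a b c d) L)"
proof -
  obtain u v where uv: "u \<noteq> 0" "v \<noteq> 0" "\<not> proportional u v" "L = line_through u v"
    using assms(2) unfolding is_line_def by blast
  let ?T = "Tm a b c d"
  have "u v* ?T \<noteq> 0" "v v* ?T \<noteq> 0" using uv Tm_vm_inj[OF assms(1)] by blast+
  moreover have "\<not> proportional (u v* ?T) (v v* ?T)"
  proof
    assume "proportional (u v* ?T) (v v* ?T)"
    then obtain k where k: "k \<noteq> 0" "v v* ?T = k *s (u v* ?T)" unfolding proportional_def by blast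
    then have "(v - k *s u) v* ?T = 0"
      by (simp add: vector_matrix_mult_diff_distrib scalar_vector_matrix_assoc)
    then have "v - k *s u = 0" by (rule Tm_vm_inj[OF assms(1)])
    then have "v = k *s u" by simp
    then show False using uv(3) k(1) unfolding proportional_def by blast
  qed
  ultimately show ?thesis unfolding is_line_def uv(4) img_lt by blast
qed

lemma UG_img: assumes "a*d-b*c \<noteq> 0" "UG x y L"
  shows "UG (a*x+b*y) (c*x+d*y) (img (Tm a b c d) L)"
proof -
  let ?T = "Tm a b c d"
  have nz: "a*x+b*y \<noteq> 0 \<or> c*x+d*y \<noteq> 0" using assms det_nz unfolding UG_def by blast
  have "nu (a*x+b*y) (c*x+d*y) \<in> img ?T L" using assms(2) unfolding UG_def img_def
    by (metis image_eqI nu_Tm)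
  moreover have "line_in_plane (img ?T L) (osc_h (a*x+b*y) (c*x+d*y))"
    using assms(2) unfolding UG_def line_in_plane_def img_def by (auto simp: osc_Tm)
  moreover have "img ?T L \<noteq> tan_h (a*x+b*y) (c*x+d*y)"
  proof
    assume "img ?T L = tan_h (a*x+b*y) (c*x+d*y)"
    then have "img ?T L = img ?T (tan_h x y)" using tan_Tm[OF assms(1)] by simp
    then have "L = tan_h x y" using img_inj[OF Tm_inv(1)[OF assms(1)]] by blast
    then show False using assms(2) unfolding UG_def by blast
  qed
  ultimately show ?thesis using nz unfolding UG_def by blast
qed

lemma UGamma_img: assumes two: "(2::'a::{field,finite}) = 0" and "a*d-b*c \<noteq> 0" "UGamma_line (L::('a^4) set)"
  shows "UGamma_line (img (Tm a b c d) L)"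
  using assms UGamma_iff[OF two] is_line_img UG_img by metis

definition Lb :: "'a::field \<Rightarrow> ('a^4) set" where
  "Lb y = line_through (pt 0 0 0 1) (pt 0 1 y 0)"

lemma is_line_Lb: "is_line (Lb y)"
  unfolding is_line_def Lb_def proportional_def
  by (rule exI[of _ "pt 0 0 0 1"], rule exI[of _ "pt 0 1 y 0"]) simp

lemma pdot_e1: "pdot (pt 1 0 0 0) z = z$1"
  by (simp add: pdot_def sum_4)

lemma UG_Lb: "UG 0 1 (Lb (y::'a::field))"
proof -
  have "nu 0 1 = pt 0 0 0 (1::'a)" by (simp add: nu_def)
  then have "nu 0 1 \<in> Lb y" unfolding Lb_def using lt_gen by metis
  moreover have "osc_h 0 1 = pt 1 0 0 (0::'a)" by (simp add: osc_h_def)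
  moreover have "line_in_plane (Lb y) (pt 1 0 0 0)"
    unfolding line_in_plane_def Lb_def pdot_e1 by (auto simp: lt_mem)
  moreover have "Lb y \<noteq> tan_h 0 1"
  proof
    assume "Lb y = tan_h 0 1"
    moreover have "pt 0 1 y 0 \<in> Lb y" unfolding Lb_def using lt_gen by metis
    ultimately have "pt 0 1 y 0 \<in> line_through (pt 0 0 1 0) (pt 0 0 0 3)" by (simp add: tan_h_def)
    then show False unfolding lt_mem by auto
  qed
  ultimately show ?thesis unfolding UG_def by simp
qed

lemma UG_struct: assumes three: "(3::'a::field) \<noteq> 0" and isl: "is_line L" and ug: "UG 0 1 (L::('a^4) set)"
  shows "\<exists>y. L = Lb y"
proof -
  obtain u v where uv: "u \<noteq> 0" "v \<noteq> 0" "\<not> proportional u v" "L = line_through u v"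
    using isl unfolding is_line_def by blast
  let ?e = "pt 0 0 0 (1::'a)"
  have eL: "?e \<in> L" using ug by (simp add: UG_def nu_def)
  have pl: "z$1 = 0" if "z \<in> L" for z
  proof -
    have "osc_h 0 (1::'a) = pt 1 0 0 0" by (simp add: osc_h_def)
    then show ?thesis using ug that unfolding UG_def line_in_plane_def by (simp add: pdot_e1)
  qed
  obtain \<alpha> \<beta> where ab: "?e = \<alpha> *s u + \<beta> *s v" using eL uv(4) lt_mem by blast
  obtain w where w: "w \<in> L" "L = line_through ?e w"
  proof (cases "\<beta> = 0")
    case False
    have "line_through ?e u = line_through u v"
      by (rule lt_change_pt[where \<alpha>=\<alpha> and \<beta>=\<beta> and \<gamma>=1 and \<delta>=0]) (use ab False in simp_all)
    then show ?thesis using that[of u] uv(4) lt_gen by metis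
  next
    case True
    then have "\<alpha> \<noteq> 0" using ab by auto
    have "line_through ?e v = line_through u v"
      by (rule lt_change_pt[where \<alpha>=\<alpha> and \<beta>=\<beta> and \<gamma>=0 and \<delta>=1]) (use ab True \<open>\<alpha> \<noteq> 0\<close> in simp_all)
    then show ?thesis using that[of v] uv(4) lt_gen by metis
  qed
  have w1: "w$1 = 0" using pl w(1) by blast
  have "pt 0 (w$2) (w$3) 0 = w + (-(w$4)) *s ?e" using w1 by (subst (2) pt_eta) simp
  then have L2: "L = line_through ?e (pt 0 (w$2) (w$3) 0)" using w(2) lt_addmul by metis
  show ?thesis
  proof (cases "w$2 = 0")
    case False
    have "pt 0 1 (w$3/w$2) 0 = (1/w$2) *s pt 0 (w$2) (w$3) 0" using False by simp
    then have "Lb (w$3/w$2) = line_through ?e ((1/w$2) *s pt 0 (w$2) (w$3) 0)" unfolding Lb_def by simp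
    also have "\<dots> = line_through ?e (pt 0 (w$2) (w$3) 0)" by (rule lt_scale2) (simp add: False)
    finally have "L = Lb (w$3/w$2)" using L2 by simp
    then show ?thesis by blast
  next
    case w2: True
    show ?thesis
    proof (cases "w$3 = 0")
      case False
      have "tan_h 0 1 = line_through (pt 0 0 1 0) (pt 0 0 0 (3::'a))" by (simp add: tan_h_def)
      also have "\<dots> = line_through ?e (pt 0 0 (w$3) 0)"
        by (rule lt_change_pt[where \<alpha>=0 and \<beta>="1/w$3" and \<gamma>=3 and \<delta>=0]) (use False three in simp_all)
      finally have "L = tan_h 0 1" using L2 w2 by simp
      then show ?thesis using ug unfolding UG_def by blast
    next
      case True
      have z: "pt 0 0 0 (0::'a) = 0" by simp
      have L0: "L = line_through ?e 0" using L2 w2 True z by simp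
      obtain a1 b1 where "u = a1 *s ?e + b1 *s 0" using uv(4) lt_gen L0 lt_mem by metis
      then have a1: "u = a1 *s ?e" by simp
      obtain a2 b2 where "v = a2 *s ?e + b2 *s 0" using uv(4) lt_gen L0 lt_mem by metis
      then have a2: "v = a2 *s ?e" by simp
      have "a1 \<noteq> 0" "a2 \<noteq> 0" using uv(1,2) a1 a2 by auto
      then have "v = (a2/a1) *s u" "a2/a1 \<noteq> 0" using a1 a2 by (simp_all add: vector_smult_assoc)
      then show ?thesis using uv(3) unfolding proportional_def by blast
    qed
  qed
qed



definition sa :: "'a::field option \<Rightarrow> 'a" where "sa t = (case t of Some _ \<Rightarrow> 1 | None \<Rightarrow> 0)"
definition sc :: "'a::field option \<Rightarrow> 'a" where "sc t = (case t of Some _ \<Rightarrow> 0 | None \<Rightarrow> 1)"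
abbreviation sb :: "'a::field option \<Rightarrow> 'a" where "sb t \<equiv> fst (hom t)"
abbreviation sd :: "'a::field option \<Rightarrow> 'a" where "sd t \<equiv> snd (hom t)"
abbreviation ST :: "'a::field option \<Rightarrow> 'a^4^4" where "ST t \<equiv> Tm (sa t) (sb t) (sc t) (sd t)"

lemma s_det: "sa t * sd t - sb t * sc t \<noteq> 0"
  by (cases t) (simp_all add: sa_def sc_def)

lemma img_smat1: assumes "is_line L" "k \<noteq> 0" shows "img (smat k (mat 1)) L = L"
proof -
  obtain u v where "L = line_through u v" using assms(1) unfolding is_line_def by blast
  then show ?thesis using img_smat[OF assms(2)] img_mat1 by metis
qed

lemma img_back: assumes "a*d-b*c \<noteq> 0" "is_line L"
  shows "img (Tm a b c d) (img (Tm d (-b) (-c) a) L) = L"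
  using assms by (simp add: img_comp Tm_adj img_smat1)

lemma img_back2: assumes "a*d-b*c \<noteq> 0" "is_line L"
  shows "img (Tm d (-b) (-c) a) (img (Tm a b c d) L) = L"
  using assms by (simp add: img_comp Tm_adj img_smat1)

lemma UG_normal: assumes two: "(2::'a::field) = 0" and isl: "is_line L" and ug: "UG x y (L::('a^4) set)"
  shows "\<exists>t y'. L = img (ST t) (Lb y')"
proof -
  have three: "(3::'a) \<noteq> 0" using three[OF two] by simp
  obtain t l where tl: "l \<noteq> 0" "x = l * fst (hom t)" "y = l * snd (hom t)"
    using hom_surj ug unfolding UG_def by metis
  then have ug': "UG (sb t) (sd t) L" using UG_scale[OF isl tl(1)] ug by simp
  define a where "a = sa t" define b where "b = sb t" define c where "c = sc t" define d where "d = sd t"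
  have D: "a*d-b*c \<noteq> 0" using s_det unfolding a_def b_def c_def d_def .
  have D': "d*a - (-b)*(-c) \<noteq> 0" using D by (simp add: mult.commute)
  have "UG (d*b + (-b)*d) ((-c)*b + a*d) (img (Tm d (-b) (-c) a) L)"
    using UG_img[OF D'] ug' unfolding b_def d_def by blast
  then have "UG ((a*d-b*c)*0) ((a*d-b*c)*1) (img (Tm d (-b) (-c) a) L)"
    by (simp add: algebra_simps)
  then have "UG 0 1 (img (Tm d (-b) (-c) a) L)"
    using UG_scale[OF is_line_img[OF D' isl] D] by blast
  then obtain y' where "img (Tm d (-b) (-c) a) L = Lb y'"
    using UG_struct[OF three is_line_img[OF D' isl]] by blast
  then have "L = img (Tm a b c d) (Lb y')" using img_back[OF D isl] by simp
  then show ?thesis unfolding a_def b_def c_def d_def by blast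
qed

lemma UGamma_Lb: assumes two: "(2::'a::{field,finite}) = 0" shows "UGamma_line (Lb (y::'a))"
  using UGamma_iff[OF two] is_line_Lb UG_Lb by blast

lemma UGamma_param: assumes two: "(2::'a::{field,finite}) = 0"
  shows "{L. UGamma_line L} = (\<lambda>(t,y). img (ST t) (Lb (y::'a))) ` UNIV"
proof
  show "{L. UGamma_line L} \<subseteq> (\<lambda>(t,y). img (ST t) (Lb (y::'a))) ` UNIV"
  proof
    fix L :: "('a^4) set" assume "L \<in> {L. UGamma_line L}"
    then obtain x y where "is_line L" "UG x y L" using UGamma_iff[OF two] by blast
    then obtain t y' where "L = img (ST t) (Lb y')" using UG_normal[OF two] by blast
    then show "L \<in> (\<lambda>(t,y). img (ST t) (Lb (y::'a))) ` UNIV" by auto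
  qed
  show "(\<lambda>(t,y). img (ST t) (Lb (y::'a))) ` UNIV \<subseteq> {L. UGamma_line L}"
    using UGamma_img[OF two s_det UGamma_Lb[OF two]] by auto
qed

lemma UG_unique: assumes "UG x y L" "UG x' y' L" shows "x*y' = x'*y"
proof -
  have "nu x' y' \<in> L" "line_in_plane L (osc_h x y)" using assms unfolding UG_def by blast+
  then have "(y*x' - x*y')^3 = 0" unfolding line_in_plane_def osc_nu[symmetric] by blast
  then show ?thesis by (simp add: algebra_simps)
qed

lemma UG_ST: "UG (sb t) (sd t) (img (ST t) (Lb y))"
  using UG_img[OF s_det UG_Lb, of t y] by simp

lemma Lb_inj: assumes "Lb y = Lb y'" shows "y = y'"
proof -
  have "pt 0 1 y 0 \<in> Lb y" unfolding Lb_def by (rule lt_gen)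
  then have "pt 0 1 y 0 \<in> Lb y'" using assms by simp
  then show ?thesis unfolding Lb_def lt_mem by auto
qed

lemma UGamma_inj: "inj (\<lambda>(t,y). img (ST t) (Lb (y::'a::field)))"
proof (rule injI, clarify)
  fix t y t' y' assume eq: "img (ST t) (Lb (y::'a)) = img (ST t') (Lb y')"
  have "sb t * sd t' = sb t' * sd t" using UG_unique[OF UG_ST UG_ST[of t' y', folded eq]] .
  then have tt: "t = t'" using hom_prop by blast
  then have "Lb y = Lb y'" using img_inj[OF Tm_inv(1)[OF s_det]] eq by blast
  then show "t = t' \<and> y = y'" using tt Lb_inj by blast
qed

lemma card_option_UNIV: "CARD('a::finite option) = CARD('a) + 1"
proof -
  have "(UNIV :: 'a option set) = insert None (Some ` UNIV)" by (auto intro: option.exhaust)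
  then show ?thesis by (simp add: card_image)
qed

lemma card_UGamma: assumes two: "(2::'a::{field,finite}) = 0"
  shows "card {L::('a^4) set. UGamma_line L} = (CARD('a) + 1) * CARD('a)"
  unfolding UGamma_param[OF two] card_image[OF UGamma_inj]
  by (simp add: card_option_UNIV card_cartesian_product)



definition Rb :: "'a::field \<Rightarrow> 'a \<Rightarrow> ('a^4) set" where
  "Rb b d = line_through (pt b d 0 0) (pt 0 0 b d)"

lemma ell1_Lb: "ell1 = Lb 0" by (simp add: ell1_def Lb_def)
lemma ell2_Lb: "ell2 = Lb 1" by (simp add: ell2_def Lb_def)

lemma img_ell1: assumes two: "(2::'a::field) = 0" and D: "a*d-b*c \<noteq> 0"
  shows "img (Tm a b c d) ell1 = Rb b (d::'a)"
proof -
  have th: "(3::'a) = 1" using three[OF two] .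
  have e4: "pt 0 0 0 1 v* Tm a b c d = b^2 *s pt b d 0 0 + d^2 *s pt 0 0 b d"
    unfolding Tm_def vm_mat4 smult_pt add_pt pt_eq_iff by (intro conjI; algebra)
  have e2: "pt 0 1 0 0 v* Tm a b c d = a^2 *s pt b d 0 0 + c^2 *s pt 0 0 b d"
    unfolding Tm_def vm_mat4 smult_pt add_pt pt_eq_iff by (simp add: two th algebra_simps power2_eq_square)
  have "b^2*c^2 - d^2*a^2 = (a*d-b*c)^2 + 2*(a*b*c*d - a^2*d^2)" by algebra
  then have det: "b^2*c^2 - d^2*a^2 \<noteq> 0" using D two by simp
  show ?thesis unfolding ell1_def img_lt Rb_def
    by (rule lt_change_pt[OF e4 e2 det])
qed

lemma Rb_scale: "l \<noteq> 0 \<Longrightarrow> Rb (l*b) (l*d) = Rb b d"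
proof -
  assume l: "l \<noteq> 0"
  have "Rb (l*b) (l*d) = line_through (l *s pt b d 0 0) (l *s pt 0 0 b d)" by (simp add: Rb_def)
  also have "\<dots> = Rb b d" unfolding Rb_def by (subst lt_scale[OF l], subst lt_scale2[OF l], rule refl)
  finally show ?thesis .
qed

lemma Rb_mem: "pt b d 0 0 \<in> Rb b d" unfolding Rb_def by (rule lt_gen)

lemma Rb_in_prop: assumes "pt b d 0 0 \<in> Rb b' d'" shows "b*d' = b'*d"
proof -
  obtain \<alpha> \<beta> where "pt b d 0 0 = \<alpha> *s pt b' d' 0 0 + \<beta> *s pt 0 0 b' d'"
    using assms unfolding Rb_def lt_mem by blast
  then have "b = \<alpha>*b'" "d = \<alpha>*d'" by simp_all
  then show ?thesis by simp
qed

lemma orbit_ell1: assumes two: "(2::'a::{field,finite}) = 0" and card: "CARD('a) > 5"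
  shows "orbit_Gq (ell1::('a^4) set) = {Rb b d | b d. b \<noteq> 0 \<or> d \<noteq> 0}"
proof -
  have "orbit_Gq (ell1::('a^4) set) = {img (Tm a b c d) ell1 | a b c d. a*d-b*c \<noteq> 0}"
    by (rule orbit_eq[OF card]) (simp add: ell1_def)
  also have "\<dots> = {Rb b d | b d. b \<noteq> 0 \<or> d \<noteq> 0}"
  proof (intro set_eqI iffI)
    fix L assume "L \<in> {img (Tm a b c d) ell1 | a b c d. a*d-b*c \<noteq> (0::'a)}"
    then obtain a b c d where "a*d-b*c \<noteq> (0::'a)" "L = img (Tm a b c d) ell1" by blast
    moreover have "b \<noteq> 0 \<or> d \<noteq> 0" using calculation(1) by auto
    ultimately show "L \<in> {Rb b d | b d. b \<noteq> 0 \<or> d \<noteq> 0}" using img_ell1[OF two] by blast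
  next
    fix L assume "L \<in> {Rb b d | b d. b \<noteq> 0 \<or> d \<noteq> (0::'a)}"
    then obtain b d where bd: "b \<noteq> 0 \<or> d \<noteq> 0" "L = Rb b d" by blast
    show "L \<in> {img (Tm a b c d) ell1 | a b c d. a*d-b*c \<noteq> (0::'a)}"
    proof (cases "d = 0")
      case True
      then have "0*d-b*1 \<noteq> 0" using bd by simp
      then show ?thesis using img_ell1[OF two, of 0 d b 1] bd by blast
    next
      case False
      then have "1*d-b*0 \<noteq> 0" by simp
      then show ?thesis using img_ell1[OF two, of 1 d b 0] bd by blast
    qed
  qed
  finally show ?thesis .
qed

lemma card_orbit_ell1: assumes two: "(2::'a::{field,finite}) = 0" and card: "CARD('a) > 5"
  shows "card (orbit_Gq (ell1::('a^4) set)) = CARD('a) + 1"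
proof -
  have "{Rb b d | b d. b \<noteq> 0 \<or> d \<noteq> (0::'a)} = (\<lambda>t. Rb (sb t) (sd t)) ` UNIV"
  proof (intro set_eqI iffI)
    fix L assume "L \<in> {Rb b d | b d. b \<noteq> 0 \<or> d \<noteq> (0::'a)}"
    then obtain b d where bd: "b \<noteq> 0 \<or> d \<noteq> 0" "L = Rb b d" by blast
    then obtain t l where "l \<noteq> 0" "b = l * sb t" "d = l * sd t" using hom_surj by metis
    then have "L = Rb (sb t) (sd t)" using bd Rb_scale by metis
    then show "L \<in> (\<lambda>t. Rb (sb t) (sd t)) ` UNIV" by blast
  qed (use hom_nz in auto)
  moreover have "inj (\<lambda>t::'a option. Rb (sb t) (sd t))"
  proof (rule injI)
    fix t s :: "'a option" assume "Rb (sb t) (sd t) = Rb (sb s) (sd s)"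
    then have "pt (sb t) (sd t) 0 0 \<in> Rb (sb s) (sd s)" using Rb_mem by metis
    then show "t = s" using Rb_in_prop hom_prop by metis
  qed
  ultimately show ?thesis unfolding orbit_ell1[OF two card]
    by (simp add: card_image card_option_UNIV)
qed

lemma Rb_nz: assumes "b \<noteq> 0 \<or> d \<noteq> 0" shows "is_line (Rb b d)"
  unfolding is_line_def Rb_def proportional_def
  by (rule exI[of _ "pt b d 0 0"], rule exI[of _ "pt 0 0 b d"]) (use assms in auto)

lemma Rb_compl: assumes two: "(2::'a::field) = 0" and bd: "b \<noteq> 0 \<or> d \<noteq> (0::'a)"
  shows "Rb b d \<in> compl_tangent_regulus"
proof -
  have th: "(3::'a) = 1" using three[OF two] .
  have "lines_meet (Rb b d) (tangent t)" for t
  proof -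
    define x where "x = sb t" define y where "y = sd t"
    have xy: "x \<noteq> 0 \<or> y \<noteq> 0" using hom_nz unfolding x_def y_def .
    define z where "z = pt (x^2*b) (x^2*d) (y^2*b) (y^2*d)"
    have "z = x^2 *s pt b d 0 0 + y^2 *s pt 0 0 b d" by (simp add: z_def mult_ac)
    then have z1: "z \<in> Rb b d" unfolding Rb_def lt_mem by blast
    have "z = b *s pt (3*x^2) (2*x*y) (y^2) 0 + d *s pt 0 (x^2) (2*x*y) (3*y^2)"
      by (simp add: z_def th two mult_ac)
    then have "z \<in> tan_h x y" unfolding tan_h_def lt_mem by blast
    then have z2: "z \<in> tangent t" using tangent_hom[of t] th unfolding x_def y_def by simp
    have "z \<noteq> 0" using xy bd by (auto simp: z_def)
    then show ?thesis unfolding lines_meet_def on_line_def using z1 z2 by blast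
  qed
  then show ?thesis unfolding compl_tangent_regulus_def using Rb_nz[OF bd] by blast
qed

lemma span2: assumes "L = line_through p q" "z1 \<in> L" "z2 \<in> L" "z1 \<noteq> 0" "z2 \<noteq> 0" "\<not> proportional z1 z2"
  shows "L = line_through z1 (z2::'a::field^4)"
proof -
  obtain \<alpha> \<beta> where z1: "z1 = \<alpha> *s p + \<beta> *s q" using assms(1,2) lt_mem by blast
  obtain \<gamma> \<delta> where z2: "z2 = \<gamma> *s p + \<delta> *s q" using assms(1,3) lt_mem by blast
  show ?thesis
  proof (cases "\<alpha>*\<delta> - \<beta>*\<gamma> = 0")
    case False
    then show ?thesis using lt_change_pt[OF z1 z2 False] assms(1) by simp
  next
    case True
    obtain k where k: "z2 = k *s z1"
    proof (cases "\<alpha> = 0")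
      case a0: True
      then have "\<beta> \<noteq> 0" using z1 assms(4) by auto
      then have "\<gamma> = 0" using True a0 by simp
      have "z2 = (\<delta>/\<beta>) *s z1" using z1 z2 a0 \<open>\<gamma> = 0\<close> \<open>\<beta> \<noteq> 0\<close> by (simp add: vec_eq_iff)
      then show ?thesis by (rule that)
    next
      case False
      have "\<delta> = (\<gamma>/\<alpha>)*\<beta>" using True False by (simp add: field_simps)
      then have "z2 = (\<gamma>/\<alpha>) *s z1" using z1 z2 False by (simp add: vec_eq_iff algebra_simps)
      then show ?thesis by (rule that)
    qed
    then have "k \<noteq> 0" using assms(5) by auto
    then show ?thesis using k assms(6) unfolding proportional_def by blast
  qed
qed

lemma compl_Rb: assumes two: "(2::'a::field) = 0" and L: "L \<in> (compl_tangent_regulus::('a^4) set set)"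
  shows "\<exists>b d. (b \<noteq> 0 \<or> d \<noteq> 0) \<and> L = Rb b d"
proof -
  have th: "(3::'a) = 1" using three[OF two] .
  obtain p q where pq: "L = line_through p q" using L unfolding compl_tangent_regulus_def is_line_def by blast
  have meet: "\<And>t. lines_meet L (tangent t)" using L unfolding compl_tangent_regulus_def by blast
  obtain z1 where z1: "z1 \<noteq> 0" "z1 \<in> L" "z1 \<in> tangent None"
    using meet[of None] unfolding lines_meet_def on_line_def by blast
  define u1 where "u1 = z1$1" define u2 where "u2 = z1$2"
  have z1e: "z1 = pt u1 u2 0 0" using z1(3) unfolding u1_def u2_def by (subst pt_eta) simp
  obtain z2 where z2: "z2 \<noteq> 0" "z2 \<in> L" "z2 \<in> tangent (Some 0)"
    using meet[of "Some 0"] unfolding lines_meet_def on_line_def by blast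
  obtain \<alpha> \<beta> where "z2 = \<alpha> *s pt 0 0 0 1 + \<beta> *s pt 0 0 1 0" using z2(3) by (auto simp: lt_mem)
  then have z2e: "z2 = pt 0 0 \<beta> \<alpha>" by simp
  have np: "\<not> proportional z1 z2"
  proof
    assume "proportional z1 z2"
    then obtain k where "k \<noteq> 0" "z2 = k *s z1" unfolding proportional_def by blast
    then show False using z2(1) z2e z1e by simp
  qed
  have L2: "L = line_through z1 z2" using span2[OF pq z1(2) z2(2) z1(1) z2(1) np] .
  obtain z3 where z3: "z3 \<noteq> 0" "z3 \<in> L" "z3 \<in> tangent (Some 1)"
    using meet[of "Some 1"] unfolding lines_meet_def on_line_def by blast
  obtain \<kappa> \<mu> where z3a: "z3 = \<kappa> *s z1 + \<mu> *s z2" using z3(2) L2 lt_mem by blast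
  obtain \<rho> \<sigma> where "z3 = \<rho> *s pt 1 1 1 1 + \<sigma> *s pt 3 2 1 0" using z3(3) by (auto simp: lt_mem)
  then have z3b: "z3 = pt (\<rho>+\<sigma>) \<rho> (\<rho>+\<sigma>) \<rho>" using th two by simp
  have "pt (\<kappa>*u1) (\<kappa>*u2) (\<mu>*\<beta>) (\<mu>*\<alpha>) = pt (\<rho>+\<sigma>) \<rho> (\<rho>+\<sigma>) \<rho>"
  proof -
    have A: "z3 = pt (\<kappa>*u1) (\<kappa>*u2) (\<mu>*\<beta>) (\<mu>*\<alpha>)" using z3a z1e z2e by simp
    show ?thesis using A z3b by metis
  qed
  then have "\<kappa>*u1 = \<rho>+\<sigma>" "\<mu>*\<beta> = \<rho>+\<sigma>" "\<kappa>*u2 = \<rho>" "\<mu>*\<alpha> = \<rho>"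
    by (simp only: pt_eq_iff)+
  then have e: "\<kappa>*u1 = \<mu>*\<beta>" "\<kappa>*u2 = \<mu>*\<alpha>" by simp_all
  have "\<mu> \<noteq> 0"
  proof
    assume "\<mu> = 0"
    then have "z3 = pt (\<kappa>*u1) (\<kappa>*u2) 0 0" using z3a z1e by simp
    then show False using e \<open>\<mu> = 0\<close> z3(1) by simp
  qed
  have "\<kappa> \<noteq> 0"
  proof
    assume "\<kappa> = 0"
    then have "z3 = pt 0 0 (\<mu>*\<beta>) (\<mu>*\<alpha>)" using z3a z2e by simp
    then show False using e \<open>\<kappa> = 0\<close> z3(1) by simp
  qed
  have z2k: "z2 = (\<kappa>/\<mu>) *s pt 0 0 u1 u2" using e \<open>\<mu> \<noteq> 0\<close> z2e by (simp add: field_simps)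
  have k0: "\<kappa>/\<mu> \<noteq> 0" using \<open>\<mu> \<noteq> 0\<close> \<open>\<kappa> \<noteq> 0\<close> by simp
  have "L = line_through (pt u1 u2 0 0) ((\<kappa>/\<mu>) *s pt 0 0 u1 u2)" unfolding L2 z1e z2k ..
  also have "\<dots> = Rb u1 u2" unfolding Rb_def by (rule lt_scale2[OF k0])
  finally have "L = Rb u1 u2" .
  moreover have "u1 \<noteq> 0 \<or> u2 \<noteq> 0" using z1(1) z1e by auto
  ultimately show ?thesis by blast
qed

lemma orbit_ell1_compl: assumes two: "(2::'a::{field,finite}) = 0" and card: "CARD('a) > 5"
  shows "orbit_Gq (ell1::('a^4) set) = compl_tangent_regulus"
proof (intro set_eqI iffI)
  fix L assume "L \<in> orbit_Gq (ell1::('a^4) set)"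
  then obtain b d where "b \<noteq> 0 \<or> d \<noteq> 0" "L = Rb b d" unfolding orbit_ell1[OF two card] by blast
  then show "L \<in> compl_tangent_regulus" using Rb_compl[OF two] by simp
next
  fix L assume "L \<in> (compl_tangent_regulus::('a^4) set set)"
  then obtain b d where "b \<noteq> 0 \<or> d \<noteq> 0" "L = Rb b d" using compl_Rb[OF two] by blast
  then show "L \<in> orbit_Gq (ell1::('a^4) set)" unfolding orbit_ell1[OF two card] by blast
qed



lemma Lb_ell2: assumes "y \<noteq> 0" shows "Lb y = img (Tm 1 0 0 y) ell2"
proof -
  have "img (Tm 1 0 0 y) ell2 = line_through (pt 0 0 0 (y^3)) (pt 0 y (y^2) 0)"
    unfolding ell2_def img_lt by (simp add: Tm_def)
  also have "\<dots> = Lb y" unfolding Lb_def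
    by (rule lt_change_pt[where \<alpha>="y^3" and \<beta>=0 and \<gamma>=0 and \<delta>=y]) (use assms in \<open>simp_all add: power2_eq_square\<close>)
  finally show ?thesis by simp
qed

lemma orbit_ell1': "CARD('a::{field,finite}) > 5 \<Longrightarrow>
  orbit_Gq (ell1::('a^4) set) = {img (Tm a b c d) ell1 | a b c d. a*d-b*c \<noteq> 0}"
  by (rule orbit_eq) (simp_all add: ell1_def)

lemma orbit_ell2': "CARD('a::{field,finite}) > 5 \<Longrightarrow>
  orbit_Gq (ell2::('a^4) set) = {img (Tm a b c d) ell2 | a b c d. a*d-b*c \<noteq> 0}"
  by (rule orbit_eq) (simp_all add: ell2_def)

lemma UGamma_orbits: assumes two: "(2::'a::{field,finite}) = 0" and card: "CARD('a) > 5"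
  shows "{L. UGamma_line L} = orbit_Gq (ell1 :: ('a^4) set) \<union> orbit_Gq ell2"
proof (intro set_eqI iffI)
  fix L :: "('a^4) set" assume "L \<in> {L. UGamma_line L}"
  then have "L \<in> (\<lambda>(t,y). img (ST t) (Lb (y::'a))) ` UNIV" using UGamma_param[OF two] by simp
  then obtain p where p: "L = (\<lambda>(t,y). img (ST t) (Lb (y::'a))) p" by blast
  obtain t y where "p = (t, y)" by (cases p)
  then have L: "L = img (ST t) (Lb y)" using p by simp
  show "L \<in> orbit_Gq ell1 \<union> orbit_Gq ell2"
  proof (cases "y = 0")
    case True
    then have L1: "L = img (ST t) ell1" using L ell1_Lb by metis
    have "L \<in> {img (Tm a b c d) ell1 | a b c d. a*d-b*c \<noteq> (0::'a)}"
      unfolding mem_Collect_eq by (intro exI conjI, rule L1, rule s_det)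
    then show ?thesis using orbit_ell1'[OF card] by simp
  next
    case False
    have "L = img (ST t) (img (Tm 1 0 0 y) ell2)" using L Lb_ell2[OF False] by metis
    also have "\<dots> = img (Tm 1 0 0 y ** ST t) ell2" by (rule img_comp)
    also have "\<dots> = img (Tm (1* sa t+0* sb t) (0* sa t+y* sb t) (1* sc t+0* sd t) (0* sc t+y* sd t)) ell2"
      by (simp only: Tm_mult)
    finally have L2: "L = img (Tm (1* sa t+0* sb t) (0* sa t+y* sb t) (1* sc t+0* sd t) (0* sc t+y* sd t)) ell2" .
    have "(1* sa t+0* sb t)*(0* sc t+y* sd t) - (0* sa t+y* sb t)*(1* sc t+0* sd t) = (1*y-0*0)*(sa t* sd t-sb t* sc t)"
      by (rule det_mult)
    then have nz: "(1* sa t+0* sb t)*(0* sc t+y* sd t) - (0* sa t+y* sb t)*(1* sc t+0* sd t) \<noteq> 0"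
      using False s_det[of t] by simp
    have "L \<in> {img (Tm a b c d) ell2 | a b c d. a*d-b*c \<noteq> (0::'a)}"
      unfolding mem_Collect_eq by ((rule exI)+, rule conjI[OF L2 nz])
    then show ?thesis using orbit_ell2'[OF card] by simp
  qed
next
  fix L :: "('a^4) set" assume "L \<in> orbit_Gq ell1 \<union> orbit_Gq ell2"
  then consider "L \<in> orbit_Gq ell1" | "L \<in> orbit_Gq ell2" by blast
  then show "L \<in> {L. UGamma_line L}"
  proof cases
    case 1
    then have "L \<in> {img (Tm a b c d) ell1 | a b c d. a*d-b*c \<noteq> (0::'a)}" using orbit_ell1'[OF card] by simp
    then obtain a b c d where "a*d-b*c \<noteq> (0::'a)" "L = img (Tm a b c d) ell1" by blast
    moreover have "UGamma_line (ell1::('a^4) set)" using UGamma_Lb[OF two] ell1_Lb by metis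
    ultimately show ?thesis using UGamma_img[OF two] by simp
  next
    case 2
    then have "L \<in> {img (Tm a b c d) ell2 | a b c d. a*d-b*c \<noteq> (0::'a)}" using orbit_ell2'[OF card] by simp
    then obtain a b c d where "a*d-b*c \<noteq> (0::'a)" "L = img (Tm a b c d) ell2" by blast
    moreover have "UGamma_line (ell2::('a^4) set)" using UGamma_Lb[OF two] ell2_Lb by metis
    ultimately show ?thesis using UGamma_img[OF two] by simp
  qed
qed

lemma orbits_disjoint: assumes two: "(2::'a::{field,finite}) = 0" and card: "CARD('a) > 5"
  shows "orbit_Gq (ell1 :: ('a^4) set) \<inter> orbit_Gq ell2 = {}"
proof (rule ccontr)
  assume "orbit_Gq (ell1 :: ('a^4) set) \<inter> orbit_Gq ell2 \<noteq> {}"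
  then obtain L where L1: "L \<in> orbit_Gq (ell1 :: ('a^4) set)" and L2: "L \<in> orbit_Gq ell2" by blast
  have "L \<in> {img (Tm a b c d) ell1 | a b c d. a*d-b*c \<noteq> (0::'a)}" using L1 orbit_ell1'[OF card] by simp
  then obtain a b c d where D: "a*d-b*c \<noteq> (0::'a)" "L = img (Tm a b c d) ell1" by blast
  have "L \<in> {img (Tm a b c d) ell2 | a b c d. a*d-b*c \<noteq> (0::'a)}" using L2 orbit_ell2'[OF card] by simp
  then obtain a' b' c' d' where D': "a'*d'-b'*c' \<noteq> (0::'a)" "L = img (Tm a' b' c' d') ell2" by blast
  have isl2: "is_line (ell2::('a^4) set)" using is_line_Lb ell2_Lb by metis
  have "ell2 = img (Tm d' (-b') (-c') a') L" using img_back2[OF D'(1) isl2] D'(2) by simp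
  also have "\<dots> = img (Tm a b c d ** Tm d' (-b') (-c') a') ell1" using D(2) by (simp add: img_comp)
  also have "\<dots> = img (Tm (a*d'+c*(-b')) (b*d'+d*(-b')) (a*(-c')+c*a') (b*(-c')+d*a')) ell1"
    by (simp only: Tm_mult)
  finally have e: "ell2 = img (Tm (a*d'+c*(-b')) (b*d'+d*(-b')) (a*(-c')+c*a') (b*(-c')+d*a')) ell1" .
  have "(a*d'+c*(-b'))*(b*(-c')+d*a') - (b*d'+d*(-b'))*(a*(-c')+c*a') = (a*d-b*c)*(d'*a'-(-b')*(-c'))"
    by (rule det_mult)
  moreover have "d'*a'-(-b')*(-c') \<noteq> 0" using D'(1) by (simp add: mult.commute)
  ultimately have nz: "(a*d'+c*(-b'))*(b*(-c')+d*a') - (b*d'+d*(-b'))*(a*(-c')+c*a') \<noteq> 0" using D(1) by simp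
  define B where "B = b*d'+d*(-b')" define E where "E = b*(-c')+d*a'"
  have "ell2 = Rb B E" unfolding B_def E_def using e img_ell1[OF two nz] by simp
  moreover have "B \<noteq> 0 \<or> E \<noteq> 0" using nz unfolding B_def E_def by auto
  moreover have "pt B E 0 0 \<in> Rb B E" by (rule Rb_mem)
  ultimately have "pt B E 0 0 \<in> Lb 1" "B \<noteq> 0 \<or> E \<noteq> 0" using ell2_Lb by auto
  then show False unfolding Lb_def lt_mem by auto
qed

lemma card_orbit_ell2: assumes two: "(2::'a::{field,finite}) = 0" and card: "CARD('a) > 5"
  shows "card (orbit_Gq (ell2 :: ('a^4) set)) = CARD('a)^2 - 1"
proof -
  have "card (orbit_Gq (ell1 :: ('a^4) set) \<union> orbit_Gq ell2) = card (orbit_Gq (ell1 :: ('a^4) set)) + card (orbit_Gq (ell2 :: ('a^4) set))"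
    by (rule card_Un_disjoint) (simp_all add: orbits_disjoint[OF two card])
  then have "(CARD('a) + 1) * CARD('a) = CARD('a) + 1 + card (orbit_Gq (ell2 :: ('a^4) set))"
    using card_UGamma[OF two] UGamma_orbits[OF two card] card_orbit_ell1[OF two card] by simp
  then show ?thesis by (simp add: power2_eq_square algebra_simps)
qed

definition N1 :: "'a::field \<Rightarrow> 'a \<Rightarrow> 'a^4^4" where
  "N1 c d = mat4 1 c (c^2) (c^3)  0 d 0 (c^2 * d)  0 0 (d^2) (c * d^2)  0 0 0 (d^3)"

definition N2 :: "'a::field \<Rightarrow> 'a^4^4" where
  "N2 c = mat4 1 c (c^2) (c^3)  0 1 0 (c^2)  0 0 1 c  0 0 0 1"

lemma N1_Tm: assumes two: "(2::'a::field) = 0" shows "N1 c d = Tm 1 0 c (d::'a)"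
proof -
  have th: "(3::'a) = 1" using three[OF two] .
  show ?thesis unfolding N1_def Tm_def mat4_eq_iff by (simp add: two th)
qed

lemma N2_Tm: assumes two: "(2::'a::field) = 0" shows "N2 c = Tm 1 0 c (1::'a)"
proof -
  have th: "(3::'a) = 1" using three[OF two] .
  show ?thesis unfolding N2_def Tm_def mat4_eq_iff by (simp add: two th)
qed

lemma Tm_norm: assumes "a \<noteq> 0" shows "proj_class (Tm a 0 c d) = proj_class (Tm 1 0 (c/a) (d/a))"
proof -
  have "Tm a 0 c d = Tm (a*1) (a*0) (a*(c/a)) (a*(d/a))" using assms by simp
  also have "\<dots> = smat (a^3) (Tm 1 0 (c/a) (d/a))" by (rule Tm_hom)
  finally have "proj_class (Tm a 0 c d) = proj_class (smat (a^3) (Tm 1 0 (c/a) (d/a)))" by simp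
  also have "\<dots> = proj_class (Tm 1 0 (c/a) (d/a))" by (rule proj_class_smat_eq) (simp add: assms)
  finally show ?thesis .
qed

lemma Rb01: "Rb 0 1 = ell1"
  unfolding Rb_def ell1_def by (rule lt_swap)

lemma stab1: assumes two: "(2::'a::{field,finite}) = 0" and card: "CARD('a) > 5"
  shows "stab_Gq (ell1 :: ('a^4) set) = (\<lambda>(c,d). proj_class (N1 c d)) ` (UNIV \<times> (UNIV - {0}))"
proof -
  have se: "stab_Gq (ell1 :: ('a^4) set) = {proj_class (Tm a b c d) | a b c d. a*d-b*c \<noteq> 0 \<and> img (Tm a b c d) ell1 = ell1}"
    by (rule stab_eq[OF card]) (simp add: ell1_def)
  show ?thesis unfolding se
  proof (intro set_eqI iffI)
    fix \<phi> assume "\<phi> \<in> {proj_class (Tm a b c d) | a b c d. a*d-b*c \<noteq> (0::'a) \<and> img (Tm a b c d) ell1 = ell1}"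
    then obtain a b c d where abcd: "a*d-b*c \<noteq> (0::'a)" "img (Tm a b c d) ell1 = ell1" "\<phi> = proj_class (Tm a b c d)"
      by blast
    then have "Rb b d = Rb 0 1" using img_ell1[OF two abcd(1)] Rb01 by metis
    then have "pt b d 0 0 \<in> Rb 0 1" using Rb_mem by metis
    then have b: "b = 0" using Rb_in_prop by fastforce
    then have "a \<noteq> 0" "d \<noteq> 0" using abcd(1) by auto
    then have "\<phi> = proj_class (N1 (c/a) (d/a))" "d/a \<noteq> 0" using abcd(3) b Tm_norm N1_Tm[OF two] by simp_all
    then show "\<phi> \<in> (\<lambda>(c,d). proj_class (N1 c d)) ` (UNIV \<times> (UNIV - {0}))"
      by (intro image_eqI[where x="(c/a, d/a)"]) simp_all
  next
    fix \<phi> assume "\<phi> \<in> (\<lambda>(c,d). proj_class (N1 c d)) ` (UNIV \<times> (UNIV - {0::'a}))"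
    then obtain p where p: "p \<in> UNIV \<times> (UNIV - {0::'a})" "\<phi> = (\<lambda>(c,d). proj_class (N1 c d)) p" by blast
    obtain c d where "p = (c, d)" by (cases p)
    then have cd: "d \<noteq> (0::'a)" "\<phi> = proj_class (Tm 1 0 c d)" using p N1_Tm[OF two] by simp_all
    have det: "1*d-0*c \<noteq> 0" using cd by simp
    have "img (Tm 1 0 c d) ell1 = Rb 0 d" using img_ell1[OF two det] .
    also have "\<dots> = Rb (d*0) (d*1)" by simp
    also have "\<dots> = ell1" using Rb_scale cd(1) Rb01 by metis
    finally have im: "img (Tm 1 0 c d) ell1 = ell1" .
    show "\<phi> \<in> {proj_class (Tm a b c d) | a b c d. a*d-b*c \<noteq> (0::'a) \<and> img (Tm a b c d) ell1 = ell1}"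
      unfolding mem_Collect_eq by ((rule exI)+, rule conjI[OF cd(2) conjI[OF det im]])
  qed
qed

lemma proj_class_eq_scal: assumes "proj_class A = proj_class B" obtains k where "k \<noteq> 0" "B = smat k A"
  using proj_class_self[of B] assms unfolding proj_class_smat by auto

lemma N1_inj: "inj (\<lambda>(c,d). proj_class (N1 c (d::'a::field)))"
proof (rule injI, clarify)
  fix c d c' d' :: 'a assume "proj_class (N1 c d) = proj_class (N1 c' d')"
  then obtain k where "k \<noteq> 0" "N1 c' d' = smat k (N1 c d)" by (rule proj_class_eq_scal)
  then have "1 = k" "c' = k*c" "d' = k*d" unfolding N1_def smat_mat4 mat4_eq_iff by simp_all
  then show "c = c' \<and> d = d'" by simp
qed

lemma N2_inj: "inj (\<lambda>c. proj_class (N2 (c::'a::field)))"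
proof (rule injI)
  fix c c' :: 'a assume "proj_class (N2 c) = proj_class (N2 c')"
  then obtain k where "k \<noteq> 0" "N2 c' = smat k (N2 c)" by (rule proj_class_eq_scal)
  then have "1 = k" "c' = k*c" unfolding N2_def smat_mat4 mat4_eq_iff by simp_all
  then show "c = c'" by simp
qed

lemma stab2: assumes two: "(2::'a::{field,finite}) = 0" and card: "CARD('a) > 5"
  shows "stab_Gq (ell2 :: ('a^4) set) = (\<lambda>c. proj_class (N2 c)) ` UNIV"
proof -
  have th: "(3::'a) = 1" using three[OF two] .
  have se: "stab_Gq (ell2 :: ('a^4) set) = {proj_class (Tm a b c d) | a b c d. a*d-b*c \<noteq> 0 \<and> img (Tm a b c d) ell2 = ell2}"
    by (rule stab_eq[OF card]) (simp add: ell2_def)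
  have mem2: "z \<in> (ell2::('a^4) set) \<Longrightarrow> z$1 = 0 \<and> z$2 = z$3" for z
    unfolding ell2_def lt_mem by auto
  show ?thesis unfolding se
  proof (intro set_eqI iffI)
    fix \<phi> assume "\<phi> \<in> {proj_class (Tm a b c d) | a b c d. a*d-b*c \<noteq> (0::'a) \<and> img (Tm a b c d) ell2 = ell2}"
    then obtain a b c d where abcd: "a*d-b*c \<noteq> (0::'a)" "img (Tm a b c d) ell2 = ell2" "\<phi> = proj_class (Tm a b c d)"
      by blast
    have "pt 0 0 0 1 v* Tm a b c d \<in> img (Tm a b c d) ell2" unfolding img_def ell2_def using lt_gen by blast
    then have "(pt 0 0 0 1 v* Tm a b c d) $ 1 = 0" using abcd(2) mem2 by simp
    then have b: "b = 0" by (simp add: Tm_def)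
    then have a: "a \<noteq> 0" and d: "d \<noteq> 0" using abcd(1) by auto
    define c' where "c' = c/a" define d' where "d' = d/a"
    have d': "d' \<noteq> 0" using a d by (simp add: d'_def)
    have \<phi>: "\<phi> = proj_class (Tm 1 0 c' d')" using abcd(3) b Tm_norm[OF a] by (simp add: c'_def d'_def)
    have "Tm a b c d = smat (a^3) (Tm 1 0 c' d')" using b a Tm_hom[of a 1 0 c' d'] by (simp add: c'_def d'_def)
    then have "img (Tm 1 0 c' d') ell2 = ell2" using abcd(2) img_smat[of "a^3"] a by (simp add: ell2_def)
    moreover have "pt 0 1 1 0 v* Tm 1 0 c' d' \<in> img (Tm 1 0 c' d') ell2"
      unfolding img_def ell2_def using lt_gen by blast
    ultimately have "(pt 0 1 1 0 v* Tm 1 0 c' d') $ 2 = (pt 0 1 1 0 v* Tm 1 0 c' d') $ 3" using mem2 by simp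
    then have "d' = d'^2" by (simp add: Tm_def two)
    then have "d' = 1" using d' by (simp add: power2_eq_square)
    then have "\<phi> = proj_class (N2 c')" using \<phi> N2_Tm[OF two] by simp
    then show "\<phi> \<in> (\<lambda>c. proj_class (N2 c)) ` UNIV" by (rule image_eqI) simp
  next
    fix \<phi> assume "\<phi> \<in> (\<lambda>c. proj_class (N2 c)) ` (UNIV::'a set)"
    then obtain c where "\<phi> = proj_class (N2 (c::'a))" by blast
    then have c: "\<phi> = proj_class (Tm 1 0 c (1::'a))" using N2_Tm[OF two] by simp
    have det: "1*1-0*c \<noteq> (0::'a)" by simp
    have "img (Tm 1 0 c 1) ell2 = line_through (pt 0 0 0 1) (pt 0 1 1 0 + (c^2+c) *s pt 0 0 0 1)"
      unfolding ell2_def img_lt by (simp add: Tm_def two th)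
    also have "\<dots> = ell2" unfolding ell2_def by (rule lt_addmul)
    finally have im: "img (Tm 1 0 c 1) ell2 = ell2" .
    show "\<phi> \<in> {proj_class (Tm a b c d) | a b c d. a*d-b*c \<noteq> (0::'a) \<and> img (Tm a b c d) ell2 = ell2}"
      unfolding mem_Collect_eq by ((rule exI)+, rule conjI[OF c conjI[OF det im]])
  qed
qed



theorem theorem6p3:
  assumes "even CARD('a::{field,finite})" and "CARD('a) \<ge> 8"
  shows "{L. UGamma_line L} = orbit_Gq (ell1 :: ('a^4) set) \<union> orbit_Gq ell2
    \<and> orbit_Gq (ell1 :: ('a^4) set) \<inter> orbit_Gq ell2 = {}
    \<and> card (orbit_Gq (ell1 :: ('a^4) set)) = CARD('a) + 1
    \<and> card (orbit_Gq (ell2 :: ('a^4) set)) = CARD('a)^2 - 1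
    \<and> orbit_Gq (ell1 :: ('a^4) set) = compl_tangent_regulus
    \<and> card (stab_Gq (ell1 :: ('a^4) set)) = CARD('a) * (CARD('a) - 1)
    \<and> (\<forall>\<phi>\<in>stab_Gq (ell1 :: ('a^4) set). \<exists>c d. d \<noteq> 0 \<and>
          mat4 1 c (c^2) (c^3)  0 d 0 (c^2 * d)  0 0 (d^2) (c * d^2)  0 0 0 (d^3) \<in> \<phi>)
    \<and> card (stab_Gq (ell2 :: ('a^4) set)) = CARD('a)
    \<and> (\<forall>\<phi>\<in>stab_Gq (ell2 :: ('a^4) set). \<exists>c.
          mat4 1 c (c^2) (c^3)  0 1 0 (c^2)  0 0 1 c  0 0 0 1 \<in> \<phi>)"
proof -
  have two: "(2::'a) = 0" using char2[OF assms(1)] .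
  have card: "CARD('a) > 5" using assms(2) by simp
  have cs1: "card (stab_Gq (ell1 :: ('a^4) set)) = CARD('a) * (CARD('a) - 1)"
  proof -
    have "card (stab_Gq (ell1 :: ('a^4) set)) = card ((UNIV::'a set) \<times> (UNIV - {0::'a}))"
      unfolding stab1[OF two card] by (rule card_image) (rule inj_on_subset[OF N1_inj], simp)
    also have "\<dots> = CARD('a) * (CARD('a) - 1)" by (simp add: card_cartesian_product)
    finally show ?thesis .
  qed
  have cs2: "card (stab_Gq (ell2 :: ('a^4) set)) = CARD('a)"
    unfolding stab2[OF two card] by (simp add: card_image[OF N2_inj])
  have f1: "\<forall>\<phi>\<in>stab_Gq (ell1 :: ('a^4) set). \<exists>c d. d \<noteq> 0 \<and>
          mat4 1 c (c^2) (c^3)  0 d 0 (c^2 * d)  0 0 (d^2) (c * d^2)  0 0 0 (d^3) \<in> \<phi>"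
  proof
    fix \<phi> assume "\<phi> \<in> stab_Gq (ell1 :: ('a^4) set)"
    then obtain p where p: "p \<in> UNIV \<times> (UNIV - {0::'a})" "\<phi> = (\<lambda>(c,d). proj_class (N1 c d)) p"
      unfolding stab1[OF two card] by blast
    obtain c d where "p = (c, d)" by (cases p)
    then have "d \<noteq> 0" "\<phi> = proj_class (N1 c d)" using p by simp_all
    then show "\<exists>c d. d \<noteq> 0 \<and> mat4 1 c (c^2) (c^3)  0 d 0 (c^2 * d)  0 0 (d^2) (c * d^2)  0 0 0 (d^3) \<in> \<phi>"
      using proj_class_self[of "N1 c d"] unfolding N1_def by blast
  qed
  have f2: "\<forall>\<phi>\<in>stab_Gq (ell2 :: ('a^4) set). \<exists>c.
          mat4 1 c (c^2) (c^3)  0 1 0 (c^2)  0 0 1 c  0 0 0 1 \<in> \<phi>"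
  proof
    fix \<phi> assume "\<phi> \<in> stab_Gq (ell2 :: ('a^4) set)"
    then obtain c where "\<phi> = proj_class (N2 (c::'a))" unfolding stab2[OF two card] by blast
    then show "\<exists>c. mat4 1 c (c^2) (c^3)  0 1 0 (c^2)  0 0 1 c  0 0 0 1 \<in> \<phi>"
      using proj_class_self[of "N2 c"] unfolding N2_def by blast
  qed
  note r1 = UGamma_orbits[OF two card] and r2 = orbits_disjoint[OF two card]
    and r3 = card_orbit_ell1[OF two card] and r4 = card_orbit_ell2[OF two card]
    and r5 = orbit_ell1_compl[OF two card]
  show ?thesis
    by (intro conjI, fact r1, fact r2, fact r3, fact r4, fact r5, fact cs1, fact f1, fact cs2, fact f2)
qed


end
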